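(* Let $(\alpha_1,\alpha_2)$ be a good pair with canonical representation $(x,y,z)$ and set $\alpha_3:=1-x^2$. Suppose $a_{12},a_{13},a_{23},d$ are nonnegative reals satisfying all of \begin{align*} a_{12}(a_{12}+d)&>\alpha_1+\alpha_2-1,\\ a_{13}(a_{13}+d)&>\alpha_1+\alpha_3-1,\\ a_{23}(a_{23}+d)&>\alpha_2+\alpha_3-1,\\ \textstyle\sum_{ij\in\{12,13,23\}}a_{ij}(a_{ij}+d)&>\alpha_1+\alpha_2+\alpha_3-1,\\ a_{12}^2+2a_{13}^2+2a_{23}^2+2a_{13}d+2a_{23}d&>2\alpha_1+2\alpha_2+3\alpha_3-3,\\ 2a_{12}^2+a_{13}^2+2a_{23}^2+2a_{12}d+2a_{23}d&>2\alpha_1+3\alpha_2+2\alpha_3-3,\\ 2a_{12}^2+2a_{13}^2+a_{23}^2+2a_{12}d+2a_{13}d&>3\alpha_1+2\alpha_2+2\alpha_3-3. \end{align*} Then $a_{12}+a_{13}+a_{23}+d>1$.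
   Context: $\tau=\frac{4-\sqrt7}{9}$. A pair $(\alpha_1,\alpha_2)\in[0,1]^2$ is a good pair if $\max\{\frac14,\frac{\alpha_1+\sqrt{2\alpha_1-1}}{2}\}\le\alpha_2$ and $\max\{\alpha_2,1-\alpha_2,\frac{1+\tau^2}{2}\}\le\alpha_1$, and in addition the unique $(x,y,z)\in[0,1]^3$ with $x+y+z=1$, $x\ge\frac12$, $\alpha_1=x^2+y^2$, $\alpha_2=x^2+z^2$ satisfies $2x^2+z^2\ge1$; this $(x,y,z)$ is the canonical representation. *)

theory Defs
  imports Complex_Main
begin

definition tau :: real where
  "tau = (4 - sqrt 7) / 9"

definition canonical_rep :: "real \<Rightarrow> real \<Rightarrow> real \<Rightarrow> real \<Rightarrow> real \<Rightarrow> bool" where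
  "canonical_rep a1 a2 x y z \<longleftrightarrow>
     0 \<le> x \<and> x \<le> 1 \<and> 0 \<le> y \<and> y \<le> 1 \<and> 0 \<le> z \<and> z \<le> 1 \<and>
     x + y + z = 1 \<and> x \<ge> 1/2 \<and> a1 = x^2 + y^2 \<and> a2 = x^2 + z^2"

definition good_pair :: "real \<Rightarrow> real \<Rightarrow> bool" where
  "good_pair a1 a2 \<longleftrightarrow>
     0 \<le> a1 \<and> a1 \<le> 1 \<and> 0 \<le> a2 \<and> a2 \<le> 1 \<and>
     max (1/4) ((a1 + sqrt (2*a1 - 1)) / 2) \<le> a2 \<and>
     max (max a2 (1 - a2)) ((1 + tau^2) / 2) \<le> a1 \<and>
     (\<exists>!(x,y,z). canonical_rep a1 a2 x y z) \<and>
     (\<forall>x y z. canonical_rep a1 a2 x y z \<longrightarrow> 2*x^2 + z^2 \<ge> 1)"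

end

theory Submission imports Defs begin

lemma cert_A:
  fixes x y z t p q r d Gc Gd Ge Gf G1 G2 G3 :: real
  assumes hx: "x = 1 - y - z" and hd: "d = 1 - p - q - r"
    and hGc: "Gc = (1-x)*(3*x-1) - (1-p)*(3*p-1) - 2*d^2"
    and hGd: "Gd = (1-y)*(3*y-1) + 4*z*(x-t) + 2*(x*y+x*z+y*z) - (1-q)*(3*q-1) - 2*d^2"
    and hGe: "Ge = (1-z)*(3*z-1) + 4*y*(x-t) + 2*(x*y+x*z+y*z) - (1-r)*(3*r-1) - 2*d^2"
    and hGf: "Gf = x*y+x*z+y*z - (p*q+q*r+r*p + d/2)"
    and hG1: "G1 = p*(p+d) - t^2"
    and hG2: "G2 = q*(q+d) - y^2"
    and hG3: "G3 = r*(r+d) - z^2"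
    and Ly_z: "0 \<le> y - z"
    and Lz: "0 \<le> z"
    and Lt_y: "0 \<le> t - y"
    and Lp: "0 \<le> p"
    and Lq: "0 \<le> q"
    and Lr: "0 \<le> r"
    and Ld: "0 \<le> d"
    and Lx_p: "0 \<le> x - p"
    and Lw: "0 \<le> 4/3 - x - p"
    and Lx_t: "0 \<le> x - t"
    and LP2: "0 \<le> p - 1/2"
    and Gc0: "0 < Gc"
    and Gd0: "0 < Gd"
    and Ge0: "0 < Ge"
    and Gf0: "0 < Gf"
    and G10: "0 < G1"
    and G20: "0 < G2"
    and G30: "0 < G3"
    and eq: "t^2 = x^2 - 2*(x*y+x*z+y*z)"
  shows False
proof -
  have y0: "0 \<le> y" using Ly_z Lz by linarith
  have t0: "0 \<le> t" using Lt_y y0 by linarith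
  have ident: "1*Gf + ((6949/3000)*(Gc*(t - y)) + (2711/120)*(Gc*(p - 1/2)) + (99/500)*(Gc*(y - z)*(t - y)) + (753/500)*(Gc*(y - z)*(q)) + (2297/600)*(Gc*(z)*(r)) + (5117/1500)*(Gc*(z)*(d)) + (7943/3000)*(Gc*(z)*(x - p)) + (853/750)*(Gc*(z)*(x - t)) + (17839/3000)*(Gc*(t - y)*(p)) + (5111/3000)*(Gc*(t - y)*(r)) + (11647/3000)*(Gc*(p)*(r)) + (14009/3000)*(Gc*(p)*(d)) + (701/120)*(Gc*(p)*(x - t)) + (3/5)*(Gc*(q)*(4/3 - x - p)) + (104/125)*(Gc*(r)*(r)) + (2531/1500)*(Gc*(r)*(x - t)) + (139/1000)*(Gc*(d)*(d)) + (1979/1500)*(Gc*(d)*(x - t)) + (629/600)*(Gc*(d)*(p - 1/2)) + (1909/3000)*(Gc*(x - p)*(4/3 - x - p)) + (56/125)*(Gc*(x - t)*(x - t)) + (1361/3000)*(Gd*(t - y)*(t - y)) + (11/12)*(Gd*(t - y)*(4/3 - x - p)) + (829/500)*(Gd*(4/3 - x - p)*(p - 1/2)) + (509/500)*(Ge*(y - z)*(r)) + (321/1000)*(Ge*(z)*(t - y)) + (3071/3000)*(Ge*(t - y)*(r)) + (2159/3000)*(Ge*(t - y)*(d)) + (6139/3000)*(Ge*(r)*(4/3 - x - p)) + (13499/1500)*(Gf*(r)) + (8251/150)*(Gf*(d)) + (31129/1500)*(Gf*(x - p)) + (116011/3000)*(Gf*(4/3 - x - p)) + (5033/1500)*(Gf*(x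 - t)) + (11759/1000)*(Gf*(y - z)*(z)) + (27107/3000)*(Gf*(y - z)*(r)) + (11197/3000)*(Gf*(y - z)*(x - t)) + (34447/1500)*(Gf*(z)*(q)) + (2549/750)*(Gf*(t - y)*(x - t)) + (7433/3000)*(Gf*(q)*(x - t)) + (11143/1500)*(Gf*(d)*(d)) + (1887/250)*(Gf*(d)*(x - p)) + (119/20)*(Gf*(x - p)*(x - p)) + (11897/3000)*(Gf*(x - p)*(x - t)) + (5699/1000)*(Gf*(4/3 - x - p)*(x - t)) + (8213/3000)*(G1*(t - y)*(d)) + (30761/1500)*(G2*(r)) + (5723/500)*(G2*(z)*(z)) + (1426/75)*(G2*(r)*(r)) + (3817/150)*(G2*(r)*(d)) + (4937/500)*(G2*(r)*(x - p)) + (1347/250)*(G2*(r)*(x - t)) + (15821/3000)*(G2*(d)*(4/3 - x - p)) + (12933/1000)*(G3*(y - z)) + (68789/3000)*(G3*(q)) + (67367/3000)*(G3*(y - z)*(y - z)) + (363/100)*(G3*(y - z)*(p)) + (88979/3000)*(G3*(y - z)*(q)) + (20189/1000)*(G3*(y - z)*(d)) + (433/300)*(G3*(t - y)*(x - t)) + (51201/1000)*(G3*(q)*(d)) + (106/125)*(G3*(q)*(x - p)) + (48467/3000)*(G3*(d)*(d)) + (2879/375)*(G3*(4/3 - x - p)*(4/3 - x - p)) + (191/1000)*((t - y)*(t - y)) + (6247/1500)*((t - y)*(d)) + (5183/750)*((d)*(4/3 - x - p)) + (2929/1500)*((y - z)*(y - z)*(t - y)) + (11213/1500)*((y - z)*(y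 - z)*(d)) + (2987/375)*((y - z)*(y - z)*(4/3 - x - p)) + (7789/3000)*((y - z)*(t - y)*(q)) + (36533/3000)*((y - z)*(t - y)*(d)) + (5549/3000)*((y - z)*(t - y)*(x - p)) + (1057/1500)*((y - z)*(d)*(d)) + (6443/750)*((z)*(d)*(4/3 - x - p)) + (3863/250)*((t - y)*(t - y)*(d)) + (1351/375)*((t - y)*(t - y)*(x - p)) + (1699/1000)*((t - y)*(t - y)*(4/3 - x - p)) + (3029/3000)*((t - y)*(t - y)*(x - t)) + (842/375)*((t - y)*(r)*(x - p)) + (401/200)*((t - y)*(d)*(4/3 - x - p)) + (6409/3000)*((t - y)*(4/3 - x - p)*(4/3 - x - p)) + (9253/600)*((q)*(r)*(4/3 - x - p)) + (7399/600)*((q)*(d)*(4/3 - x - p)) + (6079/600)*((d)*(d)*(d)) + (3614/375)*((d)*(d)*(x - p)) + (71/150)*((d)*(4/3 - x - p)*(4/3 - x - p)) + (9109/1500)*((y - z)*(y - z)*(y - z)*(y - z)) + (3551/3000)*((y - z)*(y - z)*(y - z)*(r)) + (83/30)*((y - z)*(y - z)*(y - z)*(d)) + (14693/1500)*((y - z)*(y - z)*(y - z)*(x - p)) + (16189/1500)*((y - z)*(y - z)*(z)*(4/3 - x - p)) + (557/3000)*((y - z)*(y - z)*(t - y)*(t - y)) + (683/600)*((y - z)*(y - z)*(t - y)*(q)) + (3397/750)*((y - z)*(y - z)*(t - y)*(4/3 - x - p)) + (4222/375)*((y - z)*(y - z)*(q)*(r)) + (151/25)*((y - z)*(y - z)*(q)*(d))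 + (388/125)*((y - z)*(y - z)*(d)*(x - p)) + (5113/3000)*((y - z)*(y - z)*(d)*(4/3 - x - p)) + (4671/1000)*((y - z)*(y - z)*(x - p)*(x - p)) + (5111/1000)*((y - z)*(y - z)*(4/3 - x - p)*(x - t)) + (3883/200)*((y - z)*(z)*(z)*(z)) + (859/250)*((y - z)*(z)*(t - y)*(x - p)) + (991/300)*((y - z)*(z)*(t - y)*(x - t)) + (11047/1000)*((y - z)*(z)*(r)*(d)) + (27611/1500)*((y - z)*(z)*(r)*(x - p)) + (101/120)*((y - z)*(t - y)*(t - y)*(q)) + (13687/3000)*((y - z)*(t - y)*(p)*(d)) + (2639/3000)*((y - z)*(t - y)*(q)*(q)) + (25691/3000)*((y - z)*(t - y)*(q)*(4/3 - x - p)) + (5393/1500)*((y - z)*(t - y)*(r)*(x - t)) + (2359/3000)*((y - z)*(t - y)*(d)*(d)) + (5491/1000)*((y - z)*(t - y)*(d)*(x - t)) + (148/375)*((y - z)*(t - y)*(x - p)*(4/3 - x - p)) + (613/750)*((y - z)*(t - y)*(x - p)*(x - t)) + (269/100)*((y - z)*(t - y)*(4/3 - x - p)*(4/3 - x - p)) + (40367/3000)*((y - z)*(q)*(q)*(4/3 - x - p)) + (10279/750)*((y - z)*(q)*(r)*(d)) + (14971/1000)*((y - z)*(q)*(r)*(p - 1/2)) + (8073/500)*((y - z)*(q)*(d)*(d)) + (11423/3000)*((y - z)*(q)*(x - p)*(4/3 - x - p)) + (1167/500)*((y - z)*(q)*(4/3 - x - p)*(x - t)) + (196/375)*((y - z)*(r)*(r)*(x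 - p)) + (2627/1500)*((y - z)*(r)*(4/3 - x - p)*(4/3 - x - p)) + (1393/750)*((y - z)*(d)*(d)*(d)) + (4151/3000)*((y - z)*(d)*(x - p)*(x - p)) + (5/8)*((y - z)*(x - p)*(x - p)*(x - p)) + (4639/1500)*((y - z)*(4/3 - x - p)*(4/3 - x - p)*(p - 1/2)) + (1417/200)*((z)*(z)*(x - p)*(x - p)) + (1991/600)*((z)*(t - y)*(t - y)*(x - p)) + (10763/600)*((z)*(q)*(d)*(4/3 - x - p)) + (2053/1000)*((z)*(r)*(d)*(x - p)) + (2707/750)*((z)*(r)*(4/3 - x - p)*(x - t)) + (431/1000)*((t - y)*(t - y)*(t - y)*(t - y)) + (113/750)*((t - y)*(t - y)*(t - y)*(r)) + (883/375)*((t - y)*(t - y)*(p)*(x - p)) + (6823/3000)*((t - y)*(t - y)*(q)*(r)) + (6537/1000)*((t - y)*(t - y)*(q)*(4/3 - x - p)) + (2623/1500)*((t - y)*(t - y)*(x - p)*(x - t)) + (257/750)*((t - y)*(t - y)*(4/3 - x - p)*(4/3 - x - p)) + (16033/3000)*((t - y)*(p)*(p)*(x - p)) + (373/600)*((t - y)*(p)*(r)*(r)) + (2029/1000)*((t - y)*(p)*(d)*(4/3 - x - p)) + (1189/1000)*((t - y)*(q)*(q)*(q)) + (238/75)*((t - y)*(q)*(4/3 - x - p)*(4/3 - x - p)) + (31/60)*((t - y)*(q)*(x - t)*(x - t)) + (7553/3000)*((t - y)*(q)*(x - t)*(p - 1/2)) + (3389/1500)*((t - y)*(r)*(d)*(d))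 + (1361/1500)*((t - y)*(r)*(d)*(x - p)) + (6113/3000)*((t - y)*(r)*(x - p)*(4/3 - x - p)) + (1507/3000)*((t - y)*(d)*(d)*(4/3 - x - p)) + (533/600)*((t - y)*(d)*(x - p)*(x - p)) + (28187/1500)*((p)*(q)*(r)*(4/3 - x - p)) + (2596/375)*((p)*(r)*(d)*(4/3 - x - p)) + (10211/375)*((q)*(q)*(r)*(d)) + (75749/3000)*((q)*(q)*(r)*(4/3 - x - p)) + (1033/125)*((q)*(r)*(x - p)*(p - 1/2)) + (14459/3000)*((q)*(d)*(d)*(x - p)) + (68629/3000)*((r)*(r)*(r)*(p - 1/2)) + (8393/3000)*((r)*(r)*(d)*(4/3 - x - p)) + (4147/600)*((r)*(r)*(x - p)*(x - p)) + (588/125)*((r)*(r)*(p - 1/2)*(p - 1/2)) + (879/500)*((r)*(4/3 - x - p)*(4/3 - x - p)*(4/3 - x - p)) + (3223/750)*((r)*(4/3 - x - p)*(x - t)*(x - t)) + (67/375)*((d)*(d)*(d)*(d)) + (163/1000)*((d)*(d)*(x - p)*(4/3 - x - p)) + (887/250)*((d)*(d)*(4/3 - x - p)*(4/3 - x - p)) + (637/300)*((d)*(x - p)*(x - p)*(x - p)) + (233/600)*((d)*(4/3 - x - p)*(4/3 - x - p)*(4/3 - x - p)) + (793/375)*((d)*(4/3 - x - p)*(x - t)*(x - t)) + (13/60)*((x - p)*(x - p)*(4/3 - x - p)*(4/3 - x - p)) + (3001/600)*((4/3 - x - p)*(4/3 - x - p)*(4/3 - x - p)*(p - 1/2))) +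 ((34/3375) + (769/81000)*(r) + (47/4500)*(r^2) + (167/18000)*(r^3) + (529/300)*(r^4) + (1553/162000)*(q) + (23/2160)*(q*r) + (79/9000)*(q*r^2) + (62629/3000)*(q*r^3) + (37/3600)*(q^2) + (11/1125)*(q^2*r) + (31/3000)*(q^2*r^2) + (1/100)*(q^3) + (1/100)*(q^3*r) + (149/1500)*(q^4) + (409/40500)*(p) + (97/10800)*(p*r) + (31/3000)*(p*r^2) + (4/375)*(p*r^3) + (77/9000)*(p*q) + (103/9000)*(p*q*r) + (4/375)*(p*q*r^2) + (49/4500)*(p*q^2) + (29/3000)*(p*q^2*r) + (29/3000)*(p*q^3) + (277/27000)*(p^2) + (221/18000)*(p^2*r) + (7/750)*(p^2*r^2) + (1/80)*(p^2*q) + (13/1500)*(p^2*q*r) + (9/1000)*(p^2*q^2) + (83/9000)*(p^3) + (9/1000)*(p^3*r) + (9/1000)*(p^3*q) + (31/3000)*(p^4) + (34/3375)*(t) + (101/9000)*(t*r) + (7/750)*(t*r^2) + (27/250)*(t*r^3) + (8/675)*(t*q) + (49/6000)*(t*q*r) + (31/3000)*(t*q*r^2) + (17/2000)*(t*q^2) + (941/1000)*(t*q^2*r) + (31/3000)*(t*q^3) + (79/9000)*(t*p) + (83/9000)*(t*p*r) + (1/100)*(t*p*r^2) + (151/18000)*(t*p*q) + (31/3000)*(t*p*q*r) + (11/1000)*(t*p*q^2) + (3/250)*(t*p^2) + (29/3000)*(t*p^2*r) + (29/3000)*(t*p^2*q) + (7/750)*(t*p^3) + (253/27000)*(t^2)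 + (91/9000)*(t^2*r) + (31/3000)*(t^2*r^2) + (7/720)*(t^2*q) + (247/750)*(t^2*q*r) + (11/150)*(t^2*q^2) + (4/375)*(t^2*p) + (1/100)*(t^2*p*r) + (7/500)*(t^2*p*q) + (29/3000)*(t^2*p^2) + (1/100)*(t^3) + (917/3000)*(t^3*r) + (59/1500)*(t^3*q) + (1/100)*(t^3*p) + (1/100)*(t^4) + (173/18000)*(z) + (623/54000)*(z*r) + (179/18000)*(z*r^2) + (1/100)*(z*r^3) + (23/2000)*(z*q) + (7/720)*(z*q*r) + (193/200)*(z*q*r^2) + (179/18000)*(z*q^2) + (29/3000)*(z*q^2*r) + (39337/3000)*(z*q^3) + (53/5400)*(z*p) + (181/18000)*(z*p*r) + (7/750)*(z*p*r^2) + (37/3600)*(z*p*q) + (7/750)*(z*p*q*r) + (1/100)*(z*p*q^2) + (37/3600)*(z*p^2) + (29/3000)*(z*p^2*r) + (1/100)*(z*p^2*q) + (1/100)*(z*p^3) + (179/18000)*(z*t) + (163/18000)*(z*t*r) + (31/3000)*(z*t*r^2) + (79/9000)*(z*t*q) + (11/1000)*(z*t*q*r) + (31/3000)*(z*t*q^2) + (193/18000)*(z*t*p) + (31/3000)*(z*t*p*r) + (31/3000)*(z*t*p*q) + (29/3000)*(z*t*p^2) + (97/9000)*(z*t^2) + (1/100)*(z*t^2*r) + (31/3000)*(z*t^2*q) + (7/750)*(z*t^2*p) + (43/1500)*(z*t^3) + (577/54000)*(z^2) + (31/3600)*(z^2*r) + (31/3000)*(z^2*r^2) + (161/18000)*(z^2*q)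 + (1/100)*(z^2*q*r) + (29/3000)*(z^2*q^2) + (91/9000)*(z^2*p) + (31/3000)*(z^2*p*r) + (7/750)*(z^2*p*q) + (29/3000)*(z^2*p^2) + (13/1500)*(z^2*t) + (4/375)*(z^2*t*r) + (11/1000)*(z^2*t*q) + (29/3000)*(z^2*t*p) + (1/100)*(z^2*t^2) + (169/18000)*(z^3) + (31/3000)*(z^3*r) + (31/3000)*(z^3*q) + (11/1000)*(z^3*p) + (11/1000)*(z^3*t) + (29/3000)*(z^4) + (53/6000)*(y) + (149/10800)*(y*r) + (143/18000)*(y*r^2) + (4/375)*(y*r^3) + (337/27000)*(y*q) + (101/18000)*(y*q*r) + (3/250)*(y*q*r^2) + (169/18000)*(y*q^2) + (11/1000)*(y*q^2*r) + (1/100)*(y*q^3) + (7/600)*(y*p) + (19/3600)*(y*p*r) + (37/3000)*(y*p*r^2) + (29/3600)*(y*p*q) + (1/75)*(y*p*q*r) + (31/3000)*(y*p*q^2) + (17/2000)*(y*p^2) + (3/250)*(y*p^2*r) + (17/1500)*(y*p^2*q) + (4/375)*(y*p^3) + (121/10800)*(y*t) + (29/3600)*(y*t*r) + (4/375)*(y*t*r^2) + (53/6000)*(y*t*q) + (7/600)*(y*t*q*r) + (31/3000)*(y*t*q^2) + (167/18000)*(y*t*p) + (11/1000)*(y*t*p*r) + (17/1500)*(y*t*p*q) + (31/3000)*(y*t*p^2) + (19/1800)*(y*t^2) + (313/1500)*(y*t^2*r) + (1/100)*(y*t^2*q) + (29/3000)*(y*t^2*p) + (593/3000)*(y*t^3)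 + (691/54000)*(y*z) + (109/18000)*(y*z*r) + (11/1000)*(y*z*r^2) + (7/1125)*(y*z*q) + (4/375)*(y*z*q*r) + (4/375)*(y*z*q^2) + (163/18000)*(y*z*p) + (11/1000)*(y*z*p*r) + (4/375)*(y*z*p*q) + (13/1500)*(y*z*p^2) + (53/9000)*(y*z*t) + (31/3000)*(y*z*t*r) + (4/375)*(y*z*t*q) + (11/1000)*(y*z*t*p) + (11/1000)*(y*z*t^2) + (49/6000)*(y*z^2) + (3/250)*(y*z^2*r) + (7/600)*(y*z^2*q) + (13/1000)*(y*z^2*p) + (19/1500)*(y*z^2*t) + (1/125)*(y*z^3) + (317/27000)*(y^2) + (31/4500)*(y^2*r) + (4/375)*(y^2*r^2) + (131/18000)*(y^2*q) + (17/1500)*(y^2*q*r) + (4/375)*(y^2*q^2) + (173/18000)*(y^2*p) + (17/1500)*(y^2*p*r) + (31/3000)*(y^2*p*q) + (13/1500)*(y^2*p^2) + (79/9000)*(y^2*t) + (11/1000)*(y^2*t*r) + (31/3000)*(y^2*t*q) + (29/3000)*(y^2*t*p) + (9/1000)*(y^2*t^2) + (137/18000)*(y^2*z) + (41/3000)*(y^2*z*r) + (37/3000)*(y^2*z*q) + (7/500)*(y^2*z*p) + (7/600)*(y^2*z*t) + (13/1500)*(y^2*z^2) + (139/18000)*(y^3) + (17/1500)*(y^3*r) + (4/375)*(y^3*q) + (19/1500)*(y^3*p) + (7/600)*(y^3*t) + (1/100)*(y^3*z) + (1/100)*(y^4)) + (0 - (72323/3000) + (42751/3000)*r + (273/20)*q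 + (69209/3000)*p + (2743/500)*t - (2803/1000)*z + (19603/3000)*y + (1793/1000)*r^2 - (3839/1000)*q*r + (369/1000)*q^2 + (703/750)*p*r + (3567/500)*p*q + (347/1000)*p^2 - (1597/500)*t*r - (9881/3000)*t*q - (13489/3000)*t*p - (441/1000)*t^2 - (297/1000)*z*r + (13/15)*z*q + (2807/300)*z*p + (14/375)*z*t + (113/1000)*z^2 + (89/750)*y*r - (8567/750)*y*q + (1333/3000)*y*p - (667/3000)*y*t + (5899/750)*y*z - (1238/375)*y^2)*(t^2 - (x^2 - 2*(x*y+x*z+y*z))) = 0"
    unfolding hGc hGd hGe hGf hG1 hG2 hG3 hx hd by algebra
  have pos: "0 < 1*Gf + ((6949/3000)*(Gc*(t - y)) + (2711/120)*(Gc*(p - 1/2)) + (99/500)*(Gc*(y - z)*(t - y)) + (753/500)*(Gc*(y - z)*(q)) + (2297/600)*(Gc*(z)*(r)) + (5117/1500)*(Gc*(z)*(d)) + (7943/3000)*(Gc*(z)*(x - p)) + (853/750)*(Gc*(z)*(x - t)) + (17839/3000)*(Gc*(t - y)*(p)) + (5111/3000)*(Gc*(t - y)*(r)) + (11647/3000)*(Gc*(p)*(r)) + (14009/3000)*(Gc*(p)*(d)) + (701/120)*(Gc*(p)*(x - t)) + (3/5)*(Gc*(q)*(4/3 - x - p)) + (104/125)*(Gc*(r)*(r)) + (2531/1500)*(Gc*(r)*(x - t)) + (139/1000)*(Gc*(d)*(d)) + (1979/1500)*(Gc*(d)*(x - t)) + (629/600)*(Gc*(d)*(p - 1/2)) +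 (1909/3000)*(Gc*(x - p)*(4/3 - x - p)) + (56/125)*(Gc*(x - t)*(x - t)) + (1361/3000)*(Gd*(t - y)*(t - y)) + (11/12)*(Gd*(t - y)*(4/3 - x - p)) + (829/500)*(Gd*(4/3 - x - p)*(p - 1/2)) + (509/500)*(Ge*(y - z)*(r)) + (321/1000)*(Ge*(z)*(t - y)) + (3071/3000)*(Ge*(t - y)*(r)) + (2159/3000)*(Ge*(t - y)*(d)) + (6139/3000)*(Ge*(r)*(4/3 - x - p)) + (13499/1500)*(Gf*(r)) + (8251/150)*(Gf*(d)) + (31129/1500)*(Gf*(x - p)) + (116011/3000)*(Gf*(4/3 - x - p)) + (5033/1500)*(Gf*(x - t)) + (11759/1000)*(Gf*(y - z)*(z)) + (27107/3000)*(Gf*(y - z)*(r)) + (11197/3000)*(Gf*(y - z)*(x - t)) + (34447/1500)*(Gf*(z)*(q)) + (2549/750)*(Gf*(t - y)*(x - t)) + (7433/3000)*(Gf*(q)*(x - t)) + (11143/1500)*(Gf*(d)*(d)) + (1887/250)*(Gf*(d)*(x - p)) + (119/20)*(Gf*(x - p)*(x - p)) + (11897/3000)*(Gf*(x - p)*(x - t)) + (5699/1000)*(Gf*(4/3 - x - p)*(x - t)) + (8213/3000)*(G1*(t - y)*(d)) + (30761/1500)*(G2*(r)) + (5723/500)*(G2*(z)*(z)) + (1426/75)*(G2*(r)*(r)) + (3817/150)*(G2*(r)*(d)) + (4937/500)*(G2*(r)*(x - p)) + (1347/250)*(G2*(r)*(x - t)) + (15821/3000)*(G2*(d)*(4/3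 - x - p)) + (12933/1000)*(G3*(y - z)) + (68789/3000)*(G3*(q)) + (67367/3000)*(G3*(y - z)*(y - z)) + (363/100)*(G3*(y - z)*(p)) + (88979/3000)*(G3*(y - z)*(q)) + (20189/1000)*(G3*(y - z)*(d)) + (433/300)*(G3*(t - y)*(x - t)) + (51201/1000)*(G3*(q)*(d)) + (106/125)*(G3*(q)*(x - p)) + (48467/3000)*(G3*(d)*(d)) + (2879/375)*(G3*(4/3 - x - p)*(4/3 - x - p)) + (191/1000)*((t - y)*(t - y)) + (6247/1500)*((t - y)*(d)) + (5183/750)*((d)*(4/3 - x - p)) + (2929/1500)*((y - z)*(y - z)*(t - y)) + (11213/1500)*((y - z)*(y - z)*(d)) + (2987/375)*((y - z)*(y - z)*(4/3 - x - p)) + (7789/3000)*((y - z)*(t - y)*(q)) + (36533/3000)*((y - z)*(t - y)*(d)) + (5549/3000)*((y - z)*(t - y)*(x - p)) + (1057/1500)*((y - z)*(d)*(d)) + (6443/750)*((z)*(d)*(4/3 - x - p)) + (3863/250)*((t - y)*(t - y)*(d)) + (1351/375)*((t - y)*(t - y)*(x - p)) + (1699/1000)*((t - y)*(t - y)*(4/3 - x - p)) + (3029/3000)*((t - y)*(t - y)*(x - t)) + (842/375)*((t - y)*(r)*(x - p)) + (401/200)*((t - y)*(d)*(4/3 - x - p)) + (6409/3000)*((t - y)*(4/3 - x - p)*(4/3 - x - p)) + (9253/600)*((q)*(r)*(4/3 - x - p)) + (7399/600)*((q)*(d)*(4/3 - x - p)) + (6079/600)*((d)*(d)*(d)) + (3614/375)*((d)*(d)*(x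 - p)) + (71/150)*((d)*(4/3 - x - p)*(4/3 - x - p)) + (9109/1500)*((y - z)*(y - z)*(y - z)*(y - z)) + (3551/3000)*((y - z)*(y - z)*(y - z)*(r)) + (83/30)*((y - z)*(y - z)*(y - z)*(d)) + (14693/1500)*((y - z)*(y - z)*(y - z)*(x - p)) + (16189/1500)*((y - z)*(y - z)*(z)*(4/3 - x - p)) + (557/3000)*((y - z)*(y - z)*(t - y)*(t - y)) + (683/600)*((y - z)*(y - z)*(t - y)*(q)) + (3397/750)*((y - z)*(y - z)*(t - y)*(4/3 - x - p)) + (4222/375)*((y - z)*(y - z)*(q)*(r)) + (151/25)*((y - z)*(y - z)*(q)*(d)) + (388/125)*((y - z)*(y - z)*(d)*(x - p)) + (5113/3000)*((y - z)*(y - z)*(d)*(4/3 - x - p)) + (4671/1000)*((y - z)*(y - z)*(x - p)*(x - p)) + (5111/1000)*((y - z)*(y - z)*(4/3 - x - p)*(x - t)) + (3883/200)*((y - z)*(z)*(z)*(z)) + (859/250)*((y - z)*(z)*(t - y)*(x - p)) + (991/300)*((y - z)*(z)*(t - y)*(x - t)) + (11047/1000)*((y - z)*(z)*(r)*(d)) + (27611/1500)*((y - z)*(z)*(r)*(x - p)) + (101/120)*((y - z)*(t - y)*(t - y)*(q)) + (13687/3000)*((y - z)*(t - y)*(p)*(d)) + (2639/3000)*((y - z)*(t - y)*(q)*(q)) + (25691/3000)*((y - z)*(t - y)*(q)*(4/3 - x - p)) + (5393/1500)*((y - z)*(t - y)*(r)*(x - t)) + (2359/3000)*((y - z)*(t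 - y)*(d)*(d)) + (5491/1000)*((y - z)*(t - y)*(d)*(x - t)) + (148/375)*((y - z)*(t - y)*(x - p)*(4/3 - x - p)) + (613/750)*((y - z)*(t - y)*(x - p)*(x - t)) + (269/100)*((y - z)*(t - y)*(4/3 - x - p)*(4/3 - x - p)) + (40367/3000)*((y - z)*(q)*(q)*(4/3 - x - p)) + (10279/750)*((y - z)*(q)*(r)*(d)) + (14971/1000)*((y - z)*(q)*(r)*(p - 1/2)) + (8073/500)*((y - z)*(q)*(d)*(d)) + (11423/3000)*((y - z)*(q)*(x - p)*(4/3 - x - p)) + (1167/500)*((y - z)*(q)*(4/3 - x - p)*(x - t)) + (196/375)*((y - z)*(r)*(r)*(x - p)) + (2627/1500)*((y - z)*(r)*(4/3 - x - p)*(4/3 - x - p)) + (1393/750)*((y - z)*(d)*(d)*(d)) + (4151/3000)*((y - z)*(d)*(x - p)*(x - p)) + (5/8)*((y - z)*(x - p)*(x - p)*(x - p)) + (4639/1500)*((y - z)*(4/3 - x - p)*(4/3 - x - p)*(p - 1/2)) + (1417/200)*((z)*(z)*(x - p)*(x - p)) + (1991/600)*((z)*(t - y)*(t - y)*(x - p)) + (10763/600)*((z)*(q)*(d)*(4/3 - x - p)) + (2053/1000)*((z)*(r)*(d)*(x - p)) + (2707/750)*((z)*(r)*(4/3 - x - p)*(x - t)) + (431/1000)*((t - y)*(t - y)*(t - y)*(t - y)) + (113/750)*((t - y)*(t - y)*(t - y)*(r)) + (883/375)*((t - y)*(t - y)*(p)*(x - p)) + (6823/3000)*((t - y)*(t -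 y)*(q)*(r)) + (6537/1000)*((t - y)*(t - y)*(q)*(4/3 - x - p)) + (2623/1500)*((t - y)*(t - y)*(x - p)*(x - t)) + (257/750)*((t - y)*(t - y)*(4/3 - x - p)*(4/3 - x - p)) + (16033/3000)*((t - y)*(p)*(p)*(x - p)) + (373/600)*((t - y)*(p)*(r)*(r)) + (2029/1000)*((t - y)*(p)*(d)*(4/3 - x - p)) + (1189/1000)*((t - y)*(q)*(q)*(q)) + (238/75)*((t - y)*(q)*(4/3 - x - p)*(4/3 - x - p)) + (31/60)*((t - y)*(q)*(x - t)*(x - t)) + (7553/3000)*((t - y)*(q)*(x - t)*(p - 1/2)) + (3389/1500)*((t - y)*(r)*(d)*(d)) + (1361/1500)*((t - y)*(r)*(d)*(x - p)) + (6113/3000)*((t - y)*(r)*(x - p)*(4/3 - x - p)) + (1507/3000)*((t - y)*(d)*(d)*(4/3 - x - p)) + (533/600)*((t - y)*(d)*(x - p)*(x - p)) + (28187/1500)*((p)*(q)*(r)*(4/3 - x - p)) + (2596/375)*((p)*(r)*(d)*(4/3 - x - p)) + (10211/375)*((q)*(q)*(r)*(d)) + (75749/3000)*((q)*(q)*(r)*(4/3 - x - p)) + (1033/125)*((q)*(r)*(x - p)*(p - 1/2)) + (14459/3000)*((q)*(d)*(d)*(x - p)) + (68629/3000)*((r)*(r)*(r)*(p - 1/2)) + (8393/3000)*((r)*(r)*(d)*(4/3 - x - p)) + (4147/600)*((r)*(r)*(x - p)*(x - p)) + (588/125)*((r)*(r)*(p - 1/2)*(p - 1/2)) + (879/500)*((r)*(4/3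 - x - p)*(4/3 - x - p)*(4/3 - x - p)) + (3223/750)*((r)*(4/3 - x - p)*(x - t)*(x - t)) + (67/375)*((d)*(d)*(d)*(d)) + (163/1000)*((d)*(d)*(x - p)*(4/3 - x - p)) + (887/250)*((d)*(d)*(4/3 - x - p)*(4/3 - x - p)) + (637/300)*((d)*(x - p)*(x - p)*(x - p)) + (233/600)*((d)*(4/3 - x - p)*(4/3 - x - p)*(4/3 - x - p)) + (793/375)*((d)*(4/3 - x - p)*(x - t)*(x - t)) + (13/60)*((x - p)*(x - p)*(4/3 - x - p)*(4/3 - x - p)) + (3001/600)*((4/3 - x - p)*(4/3 - x - p)*(4/3 - x - p)*(p - 1/2))) + ((34/3375) + (769/81000)*(r) + (47/4500)*(r^2) + (167/18000)*(r^3) + (529/300)*(r^4) + (1553/162000)*(q) + (23/2160)*(q*r) + (79/9000)*(q*r^2) + (62629/3000)*(q*r^3) + (37/3600)*(q^2) + (11/1125)*(q^2*r) + (31/3000)*(q^2*r^2) + (1/100)*(q^3) + (1/100)*(q^3*r) + (149/1500)*(q^4) + (409/40500)*(p) + (97/10800)*(p*r) + (31/3000)*(p*r^2) + (4/375)*(p*r^3) + (77/9000)*(p*q) + (103/9000)*(p*q*r) + (4/375)*(p*q*r^2) + (49/4500)*(p*q^2) + (29/3000)*(p*q^2*r) + (29/3000)*(p*q^3) + (277/27000)*(p^2) + (221/18000)*(p^2*r) + (7/750)*(p^2*r^2) + (1/80)*(p^2*q) + (13/1500)*(p^2*q*r) + (9/1000)*(p^2*q^2) + (83/9000)*(p^3)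 + (9/1000)*(p^3*r) + (9/1000)*(p^3*q) + (31/3000)*(p^4) + (34/3375)*(t) + (101/9000)*(t*r) + (7/750)*(t*r^2) + (27/250)*(t*r^3) + (8/675)*(t*q) + (49/6000)*(t*q*r) + (31/3000)*(t*q*r^2) + (17/2000)*(t*q^2) + (941/1000)*(t*q^2*r) + (31/3000)*(t*q^3) + (79/9000)*(t*p) + (83/9000)*(t*p*r) + (1/100)*(t*p*r^2) + (151/18000)*(t*p*q) + (31/3000)*(t*p*q*r) + (11/1000)*(t*p*q^2) + (3/250)*(t*p^2) + (29/3000)*(t*p^2*r) + (29/3000)*(t*p^2*q) + (7/750)*(t*p^3) + (253/27000)*(t^2) + (91/9000)*(t^2*r) + (31/3000)*(t^2*r^2) + (7/720)*(t^2*q) + (247/750)*(t^2*q*r) + (11/150)*(t^2*q^2) + (4/375)*(t^2*p) + (1/100)*(t^2*p*r) + (7/500)*(t^2*p*q) + (29/3000)*(t^2*p^2) + (1/100)*(t^3) + (917/3000)*(t^3*r) + (59/1500)*(t^3*q) + (1/100)*(t^3*p) + (1/100)*(t^4) + (173/18000)*(z) + (623/54000)*(z*r) + (179/18000)*(z*r^2) + (1/100)*(z*r^3) + (23/2000)*(z*q) + (7/720)*(z*q*r) + (193/200)*(z*q*r^2) + (179/18000)*(z*q^2) + (29/3000)*(z*q^2*r) + (39337/3000)*(z*q^3) + (53/5400)*(z*p) + (181/18000)*(z*p*r) + (7/750)*(z*p*r^2) + (37/3600)*(z*p*q) + (7/750)*(z*p*q*r) + (1/100)*(z*p*q^2) +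 (37/3600)*(z*p^2) + (29/3000)*(z*p^2*r) + (1/100)*(z*p^2*q) + (1/100)*(z*p^3) + (179/18000)*(z*t) + (163/18000)*(z*t*r) + (31/3000)*(z*t*r^2) + (79/9000)*(z*t*q) + (11/1000)*(z*t*q*r) + (31/3000)*(z*t*q^2) + (193/18000)*(z*t*p) + (31/3000)*(z*t*p*r) + (31/3000)*(z*t*p*q) + (29/3000)*(z*t*p^2) + (97/9000)*(z*t^2) + (1/100)*(z*t^2*r) + (31/3000)*(z*t^2*q) + (7/750)*(z*t^2*p) + (43/1500)*(z*t^3) + (577/54000)*(z^2) + (31/3600)*(z^2*r) + (31/3000)*(z^2*r^2) + (161/18000)*(z^2*q) + (1/100)*(z^2*q*r) + (29/3000)*(z^2*q^2) + (91/9000)*(z^2*p) + (31/3000)*(z^2*p*r) + (7/750)*(z^2*p*q) + (29/3000)*(z^2*p^2) + (13/1500)*(z^2*t) + (4/375)*(z^2*t*r) + (11/1000)*(z^2*t*q) + (29/3000)*(z^2*t*p) + (1/100)*(z^2*t^2) + (169/18000)*(z^3) + (31/3000)*(z^3*r) + (31/3000)*(z^3*q) + (11/1000)*(z^3*p) + (11/1000)*(z^3*t) + (29/3000)*(z^4) + (53/6000)*(y) + (149/10800)*(y*r) + (143/18000)*(y*r^2) + (4/375)*(y*r^3) + (337/27000)*(y*q) + (101/18000)*(y*q*r) + (3/250)*(y*q*r^2) + (169/18000)*(y*q^2) + (11/1000)*(y*q^2*r) + (1/100)*(y*q^3) + (7/600)*(y*p) + (19/3600)*(y*p*r) + (37/3000)*(y*p*r^2)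 + (29/3600)*(y*p*q) + (1/75)*(y*p*q*r) + (31/3000)*(y*p*q^2) + (17/2000)*(y*p^2) + (3/250)*(y*p^2*r) + (17/1500)*(y*p^2*q) + (4/375)*(y*p^3) + (121/10800)*(y*t) + (29/3600)*(y*t*r) + (4/375)*(y*t*r^2) + (53/6000)*(y*t*q) + (7/600)*(y*t*q*r) + (31/3000)*(y*t*q^2) + (167/18000)*(y*t*p) + (11/1000)*(y*t*p*r) + (17/1500)*(y*t*p*q) + (31/3000)*(y*t*p^2) + (19/1800)*(y*t^2) + (313/1500)*(y*t^2*r) + (1/100)*(y*t^2*q) + (29/3000)*(y*t^2*p) + (593/3000)*(y*t^3) + (691/54000)*(y*z) + (109/18000)*(y*z*r) + (11/1000)*(y*z*r^2) + (7/1125)*(y*z*q) + (4/375)*(y*z*q*r) + (4/375)*(y*z*q^2) + (163/18000)*(y*z*p) + (11/1000)*(y*z*p*r) + (4/375)*(y*z*p*q) + (13/1500)*(y*z*p^2) + (53/9000)*(y*z*t) + (31/3000)*(y*z*t*r) + (4/375)*(y*z*t*q) + (11/1000)*(y*z*t*p) + (11/1000)*(y*z*t^2) + (49/6000)*(y*z^2) + (3/250)*(y*z^2*r) + (7/600)*(y*z^2*q) + (13/1000)*(y*z^2*p) + (19/1500)*(y*z^2*t) + (1/125)*(y*z^3) + (317/27000)*(y^2) + (31/4500)*(y^2*r) + (4/375)*(y^2*r^2) + (131/18000)*(y^2*q) + (17/1500)*(y^2*q*r) + (4/375)*(y^2*q^2) + (173/18000)*(y^2*p) + (17/1500)*(y^2*p*r)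 + (31/3000)*(y^2*p*q) + (13/1500)*(y^2*p^2) + (79/9000)*(y^2*t) + (11/1000)*(y^2*t*r) + (31/3000)*(y^2*t*q) + (29/3000)*(y^2*t*p) + (9/1000)*(y^2*t^2) + (137/18000)*(y^2*z) + (41/3000)*(y^2*z*r) + (37/3000)*(y^2*z*q) + (7/500)*(y^2*z*p) + (7/600)*(y^2*z*t) + (13/1500)*(y^2*z^2) + (139/18000)*(y^3) + (17/1500)*(y^3*r) + (4/375)*(y^3*q) + (19/1500)*(y^3*p) + (7/600)*(y^3*t) + (1/100)*(y^3*z) + (1/100)*(y^4))"
    by (intro add_pos_nonneg add_nonneg_nonneg mult_nonneg_nonneg mult_pos_pos zero_le_power)
       (use Ly_z Lz Lt_y Lp Lq Lr Ld Lx_p Lw Lx_t LP2 Gc0 Gd0 Ge0 Gf0 G10 G20 G30 y0 t0 in simp_all)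
  show False using ident pos eq by simp
qed
lemma cert_B:
  fixes x y z t p q r d Gc Gd Ge Gf G1 G2 G3 :: real
  assumes hx: "x = 1 - y - z" and hd: "d = 1 - p - q - r"
    and hGc: "Gc = (1-x)*(3*x-1) - (1-p)*(3*p-1) - 2*d^2"
    and hGd: "Gd = (1-y)*(3*y-1) + 4*z*(x-t) + 2*(x*y+x*z+y*z) - (1-q)*(3*q-1) - 2*d^2"
    and hGe: "Ge = (1-z)*(3*z-1) + 4*y*(x-t) + 2*(x*y+x*z+y*z) - (1-r)*(3*r-1) - 2*d^2"
    and hGf: "Gf = x*y+x*z+y*z - (p*q+q*r+r*p + d/2)"
    and hG1: "G1 = p*(p+d) - t^2"
    and hG2: "G2 = q*(q+d) - y^2"
    and hG3: "G3 = r*(r+d) - z^2"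
    and Ly_z: "0 \<le> y - z"
    and Lz: "0 \<le> z"
    and Lt_y: "0 \<le> t - y"
    and Lp: "0 \<le> p"
    and Lq: "0 \<le> q"
    and Lr: "0 \<le> r"
    and Ld: "0 \<le> d"
    and Lx_p: "0 \<le> x - p"
    and Lw: "0 \<le> 4/3 - x - p"
    and Lx_t: "0 \<le> x - t"
    and LR2: "0 \<le> r - 1/2"
    and Lwq: "0 \<le> 4/3 - x - q"
    and Lwr: "0 \<le> 4/3 - x - r"
    and Gc0: "0 < Gc"
    and Gd0: "0 < Gd"
    and Ge0: "0 < Ge"
    and Gf0: "0 < Gf"
    and G10: "0 < G1"
    and G20: "0 < G2"
    and G30: "0 < G3"
    and eq: "t^2 = x^2 - 2*(x*y+x*z+y*z)"
  shows False
proof -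
  have y0: "0 \<le> y" using Ly_z Lz by linarith
  have t0: "0 \<le> t" using Lt_y y0 by linarith
  have ident: "1*Gf + ((79/150)*(Gc*(t - y)) + (153/1000)*(Gc*(y - z)*(y - z)) + (5351/1500)*(Gc*(y - z)*(t - y)) + (3/4)*(Gc*(y - z)*(4/3 - x - q)) + (221/150)*(Gc*(y - z)*(4/3 - x - r)) + (5831/1500)*(Gc*(t - y)*(t - y)) + (272/125)*(Gc*(t - y)*(4/3 - x - p)) + (3701/3000)*(Gc*(t - y)*(4/3 - x - q)) + (3301/1000)*(Gc*(t - y)*(4/3 - x - r)) + (893/300)*(Gc*(d)*(4/3 - x - r)) + (531/500)*(Gd*(y - z)*(y - z)) + (1201/1500)*(Gd*(y - z)*(4/3 - x - p)) + (791/1500)*(Gd*(y - z)*(r - 1/2)) + (1679/3000)*(Gd*(t - y)*(d)) + (68/75)*(Gd*(t - y)*(x - t)) + (2117/1000)*(Gd*(t - y)*(r - 1/2)) + (758/375)*(Ge*(y - z)) + (2497/600)*(Ge*(t - y)) + (7619/3000)*(Ge*(x - t)) + (6986/375)*(Ge*(r - 1/2)) + (307/250)*(Ge*(y - z)*(t - y)) + (857/1000)*(Ge*(y - z)*(4/3 - x - p)) + (149/250)*(Ge*(y - z)*(4/3 - x - q)) + (89/600)*(Ge*(y - z)*(4/3 - x - r)) + (4207/3000)*(Ge*(t - y)*(x - p)) + (481/600)*(Ge*(t - y)*(4/3 - x - p)) + (563/300)*(Ge*(r)*(d)) + (21/25)*(Ge*(r)*(x - p)) + (10493/3000)*(Ge*(r)*(x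 - t)) + (667/375)*(Ge*(d)*(4/3 - x - q)) + (2461/3000)*(Ge*(x - p)*(x - t)) + (751/1500)*(Ge*(x - t)*(4/3 - x - q)) + (26681/750)*(Gf*(d)) + (25457/3000)*(Gf*(x - t)) + (166903/3000)*(Gf*(4/3 - x - r)) + (4489/1500)*(Gf*(p)*(4/3 - x - q)) + (217/200)*(Gf*(q)*(q)) + (5051/3000)*(Gf*(q)*(4/3 - x - p)) + (1448/375)*(Gf*(r)*(4/3 - x - r)) + (1127/500)*(Gf*(d)*(d)) + (7282/375)*(Gf*(d)*(x - t)) + (446/125)*(Gf*(x - p)*(x - p)) + (201/40)*(Gf*(x - p)*(4/3 - x - r)) + (16937/3000)*(Gf*(x - t)*(4/3 - x - r)) + (36731/1500)*(G1*(q)) + (1307/750)*(G1*(y - z)*(x - t)) + (341/600)*(G1*(z)*(t - y)) + (2463/125)*(G1*(q)*(d)) + (11869/1500)*(G1*(q)*(x - t)) + (18937/3000)*(G1*(q)*(4/3 - x - r)) + (14203/750)*(G2*(p)) + (4889/1500)*(G2*(y - z)*(t - y)) + (2497/750)*(G2*(p)*(d)) + (5117/300)*(G2*(p)*(x - p)) + (293/125)*(G2*(p)*(x - t)) + (3007/250)*(G2*(p)*(4/3 - x - r)) + (9227/3000)*(G2*(d)*(4/3 - x - r)) + (3811/1500)*(G3*(y - z)*(t - y)) + (4003/1500)*(G3*(y - z)*(4/3 - x - p)) + (3541/1000)*(G3*(t - y)*(4/3 - x - p)) + (11809/3000)*((y - z)*(y - z)) + (18167/3000)*((y - z)*(r))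 + (5707/500)*((y - z)*(r - 1/2)) + (7447/3000)*((t - y)*(q)) + (3013/600)*((t - y)*(r - 1/2)) + (26047/3000)*((d)*(4/3 - x - r)) + (5403/1000)*((y - z)*(y - z)*(r)) + (19411/3000)*((y - z)*(y - z)*(x - p)) + (392/375)*((y - z)*(y - z)*(x - t)) + (5501/3000)*((y - z)*(y - z)*(4/3 - x - q)) + (28697/3000)*((y - z)*(t - y)*(r)) + (9521/750)*((y - z)*(t - y)*(x - p)) + (2407/500)*((y - z)*(t - y)*(4/3 - x - p)) + (2032/375)*((y - z)*(x - t)*(4/3 - x - r)) + (15811/1500)*((t - y)*(t - y)*(x - p)) + (3269/1500)*((t - y)*(t - y)*(4/3 - x - p)) + (2851/1000)*((t - y)*(t - y)*(x - t)) + (959/125)*((t - y)*(t - y)*(4/3 - x - r)) + (4021/750)*((t - y)*(r)*(r)) + (20741/3000)*((t - y)*(x - p)*(4/3 - x - r)) + (38519/1500)*((p)*(q)*(4/3 - x - r)) + (1368/125)*((d)*(d)*(d)) + (643/250)*((d)*(x - t)*(4/3 - x - r)) + (19789/3000)*((d)*(4/3 - x - r)*(4/3 - x - r)) + (12109/3000)*((4/3 - x - p)*(r - 1/2)*(4/3 - x - r)) + (2119/1000)*((r - 1/2)*(r - 1/2)*(4/3 - x - r)) + (1381/1000)*((y - z)*(y - z)*(y - z)*(r - 1/2)) + (1087/3000)*((y - z)*(y - z)*(y - z)*(4/3 - x - q)) + (4431/1000)*((y - z)*(y - z)*(p)*(4/3 - x - p)) + (54/25)*((y - z)*(y - z)*(q)*(4/3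 - x - q)) + (10967/3000)*((y - z)*(y - z)*(r)*(x - p)) + (551/750)*((y - z)*(y - z)*(4/3 - x - p)*(4/3 - x - r)) + (317/750)*((y - z)*(y - z)*(x - t)*(4/3 - x - q)) + (2879/3000)*((y - z)*(y - z)*(r - 1/2)*(4/3 - x - r)) + (1613/3000)*((y - z)*(t - y)*(q)*(4/3 - x - r)) + (7133/750)*((y - z)*(t - y)*(r)*(x - t)) + (111/50)*((y - z)*(t - y)*(d)*(4/3 - x - p)) + (1171/500)*((y - z)*(t - y)*(x - p)*(x - p)) + (3529/1500)*((y - z)*(t - y)*(4/3 - x - p)*(x - t)) + (952/375)*((y - z)*(p)*(p)*(x - p)) + (1243/1000)*((y - z)*(p)*(d)*(4/3 - x - q)) + (7073/3000)*((y - z)*(p)*(x - p)*(4/3 - x - q)) + (122/125)*((y - z)*(q)*(x - p)*(4/3 - x - q)) + (3411/1000)*((y - z)*(q)*(4/3 - x - p)*(x - t)) + (973/500)*((y - z)*(d)*(4/3 - x - q)*(4/3 - x - q)) + (431/600)*((y - z)*(4/3 - x - p)*(4/3 - x - p)*(r - 1/2)) + (1197/1000)*((y - z)*(4/3 - x - p)*(x - t)*(r - 1/2)) + (1071/1000)*((y - z)*(4/3 - x - p)*(r - 1/2)*(4/3 - x - q)) + (15811/3000)*((y - z)*(x - t)*(x - t)*(4/3 - x - r)) + (331/200)*((y - z)*(x - t)*(r - 1/2)*(r - 1/2)) + (14759/3000)*((t - y)*(t - y)*(q)*(d)) + (7979/3000)*((t - y)*(t - y)*(q)*(x - t)) + (307/750)*((t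 - y)*(t - y)*(d)*(4/3 - x - r)) + (193/200)*((t - y)*(t - y)*(x - p)*(x - p)) + (321/500)*((t - y)*(t - y)*(x - p)*(x - t)) + (11729/3000)*((t - y)*(t - y)*(4/3 - x - p)*(x - t)) + (994/375)*((t - y)*(t - y)*(r - 1/2)*(r - 1/2)) + (3937/3000)*((t - y)*(p)*(p)*(d)) + (409/1000)*((t - y)*(p)*(p)*(x - p)) + (1507/500)*((t - y)*(p)*(d)*(4/3 - x - q)) + (13979/1000)*((t - y)*(q)*(x - t)*(r - 1/2)) + (6857/3000)*((t - y)*(r)*(x - p)*(4/3 - x - q)) + (2749/3000)*((t - y)*(d)*(4/3 - x - q)*(4/3 - x - q)) + (7447/1500)*((t - y)*(4/3 - x - p)*(x - t)*(r - 1/2)) + (583/250)*((t - y)*(4/3 - x - p)*(4/3 - x - q)*(4/3 - x - q)) + (91/50)*((t - y)*(x - t)*(x - t)*(4/3 - x - r)) + (27241/3000)*((p)*(p)*(p)*(r - 1/2)) + (1307/600)*((p)*(q)*(x - t)*(4/3 - x - r)) + (2051/600)*((p)*(d)*(d)*(d)) + (1734/125)*((p)*(d)*(4/3 - x - q)*(4/3 - x - r)) + (2371/1000)*((p)*(4/3 - x - p)*(4/3 - x - p)*(4/3 - x - r)) + (823/120)*((p)*(4/3 - x - p)*(r - 1/2)*(4/3 - x - r)) + (6127/600)*((q)*(q)*(q)*(r - 1/2)) + (9681/1000)*((q)*(q)*(d)*(4/3 - x - r)) + (457/600)*((q)*(d)*(d)*(d)) + (13559/3000)*((q)*(4/3 -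 x - q)*(4/3 - x - q)*(4/3 - x - r)) + (8101/3000)*((r)*(4/3 - x - p)*(r - 1/2)*(4/3 - x - r)) + (1181/3000)*((d)*(d)*(d)*(4/3 - x - r)) + (1099/200)*((d)*(d)*(r - 1/2)*(r - 1/2)) + (2719/1000)*((d)*(d)*(4/3 - x - q)*(4/3 - x - r)) + (1661/3000)*((d)*(x - p)*(4/3 - x - p)*(4/3 - x - r)) + (1619/750)*((d)*(x - t)*(x - t)*(4/3 - x - r)) + (11287/3000)*((r - 1/2)*(r - 1/2)*(r - 1/2)*(r - 1/2)) + (1109/500)*((r - 1/2)*(4/3 - x - q)*(4/3 - x - r)*(4/3 - x - r)) + (1373/750)*((r - 1/2)*(4/3 - x - r)*(4/3 - x - r)*(4/3 - x - r))) + ((13051/1296000) + (121/12960)*(r) + (1061/108000)*(r^2) + (97/9000)*(r^3) + (29/3000)*(r^4) + (161/16200)*(q) + (553/54000)*(q*r) + (49/4500)*(q*r^2) + (7/750)*(q*r^3) + (1087/108000)*(q^2) + (187/18000)*(q^2*r) + (29/3000)*(q^2*r^2) + (11/1125)*(q^3) + (31/3000)*(q^3*r) + (4319/1000)*(q^4) + (83/9000)*(p) + (199/18000)*(p*r) + (23/2250)*(p*r^2) + (29/3000)*(p*r^3) + (38/3375)*(p*q) + (79/9000)*(p*q*r) + (7/750)*(p*q*r^2) + (41/4500)*(p*q^2) + (1097/3000)*(p*q^2*r) + (31/3000)*(p*q^3) + (1219/108000)*(p^2) + (73/9000)*(p^2*r) + (1/100)*(p^2*r^2) + (157/18000)*(p^2*q)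 + (31/3000)*(p^2*q*r) + (31/3000)*(p^2*q^2) + (169/18000)*(p^3) + (31/3000)*(p^3*r) + (1/100)*(p^3*q) + (2051/600)*(p^4) + (509/54000)*(t) + (647/54000)*(t*r) + (161/18000)*(t*r^2) + (31/3000)*(t*r^3) + (103/10800)*(t*q) + (31/3600)*(t*q*r) + (7/600)*(t*q*r^2) + (11629/18000)*(t*q^2) + (29/3000)*(t*q^2*r) + (1/100)*(t*q^3) + (319/27000)*(t*p) + (133/18000)*(t*p*r) + (17/1500)*(t*p*r^2) + (77/9000)*(t*p*q) + (19/1500)*(t*p*q*r) + (1/100)*(t*p*q^2) + (73/9000)*(t*p^2) + (133/1000)*(t*p^2*r) + (17/1500)*(t*p^2*q) + (4/375)*(t*p^3) + (23/2250)*(t^2) + (89/9000)*(t^2*r) + (1/100)*(t^2*r^2) + (37/3600)*(t^2*q) + (1/100)*(t^2*q*r) + (29/3000)*(t^2*q^2) + (7/750)*(t^2*p) + (269/3000)*(t^2*p*r) + (461/3000)*(t^2*p*q) + (31/3000)*(t^2*p^2) + (23/2250)*(t^3) + (397/1000)*(t^3*r) + (139/120)*(t^3*q) + (29/3000)*(t^3*p) + (1/100)*(t^4) + (181/18000)*(z) + (607/54000)*(z*r) + (59/6000)*(z*r^2) + (29/3000)*(z*r^3) + (307/27000)*(z*q) + (97/18000)*(z*q*r) + (11/1000)*(z*q*r^2) + (29/3600)*(z*q^2) + (31/3000)*(z*q^2*r) + (383/750)*(z*q^3) + (167/13500)*(z*p) + (137/18000)*(z*p*r) + (11/1000)*(z*p*r^2)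 + (859/400)*(z*p*q) + (4/375)*(z*p*q*r) + (67/125)*(z*p*q^2) + (169/18000)*(z*p^2) + (4/375)*(z*p^2*r) + (29/3000)*(z*p^2*q) + (413/1000)*(z*p^3) + (49/4000)*(z*t) + (107/18000)*(z*t*r) + (1/100)*(z*t*r^2) + (37/4500)*(z*t*q) + (7/600)*(z*t*q*r) + (4/375)*(z*t*q^2) + (1/150)*(z*t*p) + (11/1000)*(z*t*p*r) + (193/300)*(z*t*p*q) + (31/3000)*(z*t*p^2) + (73/9000)*(z*t^2) + (7/600)*(z*t^2*r) + (361/600)*(z*t^2*q) + (31/3000)*(z*t^2*p) + (31/3000)*(z*t^3) + (1183/108000)*(z^2) + (17/1500)*(z^2*r) + (7/750)*(z^2*r^2) + (199/18000)*(z^2*q) + (4/375)*(z^2*q*r) + (104/375)*(z^2*q^2) + (2263/18000)*(z^2*p) + (59/600)*(z^2*p*r) + (31/3000)*(z^2*p*q) + (31/3000)*(z^2*p^2) + (119/18000)*(z^2*t) + (37/3000)*(z^2*t*r) + (4/375)*(z^2*t*q) + (2923/3000)*(z^2*t*p) + (2153/3000)*(z^2*t^2) + (151/18000)*(z^3) + (13/1500)*(z^3*r) + (1771/1500)*(z^3*q) + (7087/3000)*(z^3*p) + (4/375)*(z^3*t) + (1/100)*(z^4) + (191/18000)*(y) + (113/10800)*(y*r) + (181/18000)*(y*r^2) + (29/3000)*(y*r^3) + (199/18000)*(y*q) + (53/6000)*(y*q*r) + (29/3000)*(y*q*r^2) + (1/125)*(y*q^2) + (7/750)*(y*q^2*r)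 + (1/100)*(y*q^3) + (49/4500)*(y*p) + (181/18000)*(y*p*r) + (29/3000)*(y*p*r^2) + (11/1200)*(y*p*q) + (13/1500)*(y*p*q*r) + (1901/750)*(y*p*q^2) + (193/18000)*(y*p^2) + (29/3000)*(y*p^2*r) + (9/1000)*(y*p^2*q) + (1469/3000)*(y*p^3) + (431/36000)*(y*t) + (107/18000)*(y*t*r) + (4/375)*(y*t*r^2) + (3/400)*(y*t*q) + (93/500)*(y*t*q*r) + (17/1500)*(y*t*q^2) + (53/9000)*(y*t*p) + (3/250)*(y*t*p*r) + (37/3000)*(y*t*p*q) + (109/600)*(y*t*p^2) + (2/225)*(y*t^2) + (4/375)*(y*t^2*r) + (29/3000)*(y*t^2*q) + (17/1500)*(y*t^2*p) + (1/100)*(y*t^3) + (137/13500)*(y*z) + (3/250)*(y*z*r) + (1/100)*(y*z*r^2) + (13/1200)*(y*z*q) + (1/75)*(y*z*q*r) + (3901/3000)*(y*z*q^2) + (11/1800)*(y*z*p) + (3/250)*(y*z*p*r) + (931/1500)*(y*z*p*q) + (7/600)*(y*z*p^2) + (1/150)*(y*z*t) + (7/600)*(y*z*t*r) + (23/750)*(y*z*t*q) + (17/1500)*(y*z*t*p) + (4/375)*(y*z*t^2) + (1/240)*(y*z^2) + (13/1500)*(y*z^2*r) + (11/1500)*(y*z^2*q) + (11/1000)*(y*z^2*p) + (47/3000)*(y*z^2*t) + (7/500)*(y*z^3) + (197/21600)*(y^2) + (23/2250)*(y^2*r) + (11/1000)*(y^2*r^2) + (43/4500)*(y^2*q) + (3/250)*(y^2*q*r)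 + (159/1000)*(y^2*q^2) + (173/18000)*(y^2*p) + (4/375)*(y^2*p*r) + (17/1500)*(y^2*p*q) + (12563/3000)*(y^2*p^2) + (71/9000)*(y^2*t) + (4/375)*(y^2*t*r) + (17/60)*(y^2*t*q) + (7/600)*(y^2*t*p) + (17/1500)*(y^2*t^2) + (3239/18000)*(y^2*z) + (23/3000)*(y^2*z*r) + (71/1000)*(y^2*z*q) + (4/375)*(y^2*z*p) + (1/60)*(y^2*z*t) + (539/3000)*(y^2*z^2) + (73/9000)*(y^3) + (9/1000)*(y^3*r) + (7/750)*(y^3*q) + (7/750)*(y^3*p) + (2267/3000)*(y^3*t) + (53/3000)*(y^3*z) + (19/100)*(y^4)) + (0 - (27997/1500) - (171/1000)*r + (74807/3000)*q + (9809/375)*p + (6269/1500)*t + (31/375)*z + (667/3000)*y + (1099/1500)*r^2 + (2227/1000)*q*r - (9169/1500)*q^2 + (12901/3000)*p*r - (4523/1500)*p*q - (1669/250)*p^2 + (1423/1000)*t*r - (9617/1500)*t*q - (3421/750)*t*p - (1/100)*t^2 + (1957/750)*z*r + (787/1000)*z*q - (381/100)*z*p + (73/600)*z*t + (1939/375)*z^2 + (30397/3000)*y*r + (301/1000)*y*q - (2709/1000)*y*p - (61/200)*y*t + (3839/1000)*y*z + (487/3000)*y^2)*(t^2 - (x^2 - 2*(x*y+x*z+y*z))) = 0"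
    unfolding hGc hGd hGe hGf hG1 hG2 hG3 hx hd by algebra
  have pos: "0 < 1*Gf + ((79/150)*(Gc*(t - y)) + (153/1000)*(Gc*(y - z)*(y - z)) + (5351/1500)*(Gc*(y - z)*(t - y)) + (3/4)*(Gc*(y - z)*(4/3 - x - q)) + (221/150)*(Gc*(y - z)*(4/3 - x - r)) + (5831/1500)*(Gc*(t - y)*(t - y)) + (272/125)*(Gc*(t - y)*(4/3 - x - p)) + (3701/3000)*(Gc*(t - y)*(4/3 - x - q)) + (3301/1000)*(Gc*(t - y)*(4/3 - x - r)) + (893/300)*(Gc*(d)*(4/3 - x - r)) + (531/500)*(Gd*(y - z)*(y - z)) + (1201/1500)*(Gd*(y - z)*(4/3 - x - p)) + (791/1500)*(Gd*(y - z)*(r - 1/2)) + (1679/3000)*(Gd*(t - y)*(d)) + (68/75)*(Gd*(t - y)*(x - t)) + (2117/1000)*(Gd*(t - y)*(r - 1/2)) + (758/375)*(Ge*(y - z)) + (2497/600)*(Ge*(t - y)) + (7619/3000)*(Ge*(x - t)) + (6986/375)*(Ge*(r - 1/2)) + (307/250)*(Ge*(y - z)*(t - y)) + (857/1000)*(Ge*(y - z)*(4/3 - x - p)) + (149/250)*(Ge*(y - z)*(4/3 - x - q)) + (89/600)*(Ge*(y - z)*(4/3 - x - r)) + (4207/3000)*(Ge*(t - y)*(x - p)) + (481/600)*(Ge*(t - y)*(4/3 - x - p)) + (563/300)*(Ge*(r)*(d)) + (21/25)*(Ge*(r)*(x - p)) + (10493/3000)*(Ge*(r)*(x - t)) + (667/375)*(Ge*(d)*(4/3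 - x - q)) + (2461/3000)*(Ge*(x - p)*(x - t)) + (751/1500)*(Ge*(x - t)*(4/3 - x - q)) + (26681/750)*(Gf*(d)) + (25457/3000)*(Gf*(x - t)) + (166903/3000)*(Gf*(4/3 - x - r)) + (4489/1500)*(Gf*(p)*(4/3 - x - q)) + (217/200)*(Gf*(q)*(q)) + (5051/3000)*(Gf*(q)*(4/3 - x - p)) + (1448/375)*(Gf*(r)*(4/3 - x - r)) + (1127/500)*(Gf*(d)*(d)) + (7282/375)*(Gf*(d)*(x - t)) + (446/125)*(Gf*(x - p)*(x - p)) + (201/40)*(Gf*(x - p)*(4/3 - x - r)) + (16937/3000)*(Gf*(x - t)*(4/3 - x - r)) + (36731/1500)*(G1*(q)) + (1307/750)*(G1*(y - z)*(x - t)) + (341/600)*(G1*(z)*(t - y)) + (2463/125)*(G1*(q)*(d)) + (11869/1500)*(G1*(q)*(x - t)) + (18937/3000)*(G1*(q)*(4/3 - x - r)) + (14203/750)*(G2*(p)) + (4889/1500)*(G2*(y - z)*(t - y)) + (2497/750)*(G2*(p)*(d)) + (5117/300)*(G2*(p)*(x - p)) + (293/125)*(G2*(p)*(x - t)) + (3007/250)*(G2*(p)*(4/3 - x - r)) + (9227/3000)*(G2*(d)*(4/3 - x - r)) + (3811/1500)*(G3*(y - z)*(t - y)) + (4003/1500)*(G3*(y - z)*(4/3 - x - p)) + (3541/1000)*(G3*(t - y)*(4/3 - x - p)) + (11809/3000)*((y - z)*(y - z)) + (18167/3000)*((y - z)*(r)) + (5707/500)*((y - z)*(r - 1/2)) +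 (7447/3000)*((t - y)*(q)) + (3013/600)*((t - y)*(r - 1/2)) + (26047/3000)*((d)*(4/3 - x - r)) + (5403/1000)*((y - z)*(y - z)*(r)) + (19411/3000)*((y - z)*(y - z)*(x - p)) + (392/375)*((y - z)*(y - z)*(x - t)) + (5501/3000)*((y - z)*(y - z)*(4/3 - x - q)) + (28697/3000)*((y - z)*(t - y)*(r)) + (9521/750)*((y - z)*(t - y)*(x - p)) + (2407/500)*((y - z)*(t - y)*(4/3 - x - p)) + (2032/375)*((y - z)*(x - t)*(4/3 - x - r)) + (15811/1500)*((t - y)*(t - y)*(x - p)) + (3269/1500)*((t - y)*(t - y)*(4/3 - x - p)) + (2851/1000)*((t - y)*(t - y)*(x - t)) + (959/125)*((t - y)*(t - y)*(4/3 - x - r)) + (4021/750)*((t - y)*(r)*(r)) + (20741/3000)*((t - y)*(x - p)*(4/3 - x - r)) + (38519/1500)*((p)*(q)*(4/3 - x - r)) + (1368/125)*((d)*(d)*(d)) + (643/250)*((d)*(x - t)*(4/3 - x - r)) + (19789/3000)*((d)*(4/3 - x - r)*(4/3 - x - r)) + (12109/3000)*((4/3 - x - p)*(r - 1/2)*(4/3 - x - r)) + (2119/1000)*((r - 1/2)*(r - 1/2)*(4/3 - x - r)) + (1381/1000)*((y - z)*(y - z)*(y - z)*(r - 1/2)) + (1087/3000)*((y - z)*(y - z)*(y - z)*(4/3 - x - q)) + (4431/1000)*((y - z)*(y - z)*(p)*(4/3 - x - p)) + (54/25)*((y - z)*(y - z)*(q)*(4/3 - x - q)) + (10967/3000)*((y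 - z)*(y - z)*(r)*(x - p)) + (551/750)*((y - z)*(y - z)*(4/3 - x - p)*(4/3 - x - r)) + (317/750)*((y - z)*(y - z)*(x - t)*(4/3 - x - q)) + (2879/3000)*((y - z)*(y - z)*(r - 1/2)*(4/3 - x - r)) + (1613/3000)*((y - z)*(t - y)*(q)*(4/3 - x - r)) + (7133/750)*((y - z)*(t - y)*(r)*(x - t)) + (111/50)*((y - z)*(t - y)*(d)*(4/3 - x - p)) + (1171/500)*((y - z)*(t - y)*(x - p)*(x - p)) + (3529/1500)*((y - z)*(t - y)*(4/3 - x - p)*(x - t)) + (952/375)*((y - z)*(p)*(p)*(x - p)) + (1243/1000)*((y - z)*(p)*(d)*(4/3 - x - q)) + (7073/3000)*((y - z)*(p)*(x - p)*(4/3 - x - q)) + (122/125)*((y - z)*(q)*(x - p)*(4/3 - x - q)) + (3411/1000)*((y - z)*(q)*(4/3 - x - p)*(x - t)) + (973/500)*((y - z)*(d)*(4/3 - x - q)*(4/3 - x - q)) + (431/600)*((y - z)*(4/3 - x - p)*(4/3 - x - p)*(r - 1/2)) + (1197/1000)*((y - z)*(4/3 - x - p)*(x - t)*(r - 1/2)) + (1071/1000)*((y - z)*(4/3 - x - p)*(r - 1/2)*(4/3 - x - q)) + (15811/3000)*((y - z)*(x - t)*(x - t)*(4/3 - x - r)) + (331/200)*((y - z)*(x - t)*(r - 1/2)*(r - 1/2)) + (14759/3000)*((t - y)*(t - y)*(q)*(d)) + (7979/3000)*((t - y)*(t - y)*(q)*(x - t)) + (307/750)*((t - y)*(t - y)*(d)*(4/3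 - x - r)) + (193/200)*((t - y)*(t - y)*(x - p)*(x - p)) + (321/500)*((t - y)*(t - y)*(x - p)*(x - t)) + (11729/3000)*((t - y)*(t - y)*(4/3 - x - p)*(x - t)) + (994/375)*((t - y)*(t - y)*(r - 1/2)*(r - 1/2)) + (3937/3000)*((t - y)*(p)*(p)*(d)) + (409/1000)*((t - y)*(p)*(p)*(x - p)) + (1507/500)*((t - y)*(p)*(d)*(4/3 - x - q)) + (13979/1000)*((t - y)*(q)*(x - t)*(r - 1/2)) + (6857/3000)*((t - y)*(r)*(x - p)*(4/3 - x - q)) + (2749/3000)*((t - y)*(d)*(4/3 - x - q)*(4/3 - x - q)) + (7447/1500)*((t - y)*(4/3 - x - p)*(x - t)*(r - 1/2)) + (583/250)*((t - y)*(4/3 - x - p)*(4/3 - x - q)*(4/3 - x - q)) + (91/50)*((t - y)*(x - t)*(x - t)*(4/3 - x - r)) + (27241/3000)*((p)*(p)*(p)*(r - 1/2)) + (1307/600)*((p)*(q)*(x - t)*(4/3 - x - r)) + (2051/600)*((p)*(d)*(d)*(d)) + (1734/125)*((p)*(d)*(4/3 - x - q)*(4/3 - x - r)) + (2371/1000)*((p)*(4/3 - x - p)*(4/3 - x - p)*(4/3 - x - r)) + (823/120)*((p)*(4/3 - x - p)*(r - 1/2)*(4/3 - x - r)) + (6127/600)*((q)*(q)*(q)*(r - 1/2)) + (9681/1000)*((q)*(q)*(d)*(4/3 - x - r)) + (457/600)*((q)*(d)*(d)*(d)) + (13559/3000)*((q)*(4/3 - x - q)*(4/3 - x - q)*(4/3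 - x - r)) + (8101/3000)*((r)*(4/3 - x - p)*(r - 1/2)*(4/3 - x - r)) + (1181/3000)*((d)*(d)*(d)*(4/3 - x - r)) + (1099/200)*((d)*(d)*(r - 1/2)*(r - 1/2)) + (2719/1000)*((d)*(d)*(4/3 - x - q)*(4/3 - x - r)) + (1661/3000)*((d)*(x - p)*(4/3 - x - p)*(4/3 - x - r)) + (1619/750)*((d)*(x - t)*(x - t)*(4/3 - x - r)) + (11287/3000)*((r - 1/2)*(r - 1/2)*(r - 1/2)*(r - 1/2)) + (1109/500)*((r - 1/2)*(4/3 - x - q)*(4/3 - x - r)*(4/3 - x - r)) + (1373/750)*((r - 1/2)*(4/3 - x - r)*(4/3 - x - r)*(4/3 - x - r))) + ((13051/1296000) + (121/12960)*(r) + (1061/108000)*(r^2) + (97/9000)*(r^3) + (29/3000)*(r^4) + (161/16200)*(q) + (553/54000)*(q*r) + (49/4500)*(q*r^2) + (7/750)*(q*r^3) + (1087/108000)*(q^2) + (187/18000)*(q^2*r) + (29/3000)*(q^2*r^2) + (11/1125)*(q^3) + (31/3000)*(q^3*r) + (4319/1000)*(q^4) + (83/9000)*(p) + (199/18000)*(p*r) + (23/2250)*(p*r^2) + (29/3000)*(p*r^3) + (38/3375)*(p*q) + (79/9000)*(p*q*r) + (7/750)*(p*q*r^2) + (41/4500)*(p*q^2) + (1097/3000)*(p*q^2*r) + (31/3000)*(p*q^3) + (1219/108000)*(p^2) + (73/9000)*(p^2*r) + (1/100)*(p^2*r^2) + (157/18000)*(p^2*q) + (31/3000)*(p^2*q*r)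 + (31/3000)*(p^2*q^2) + (169/18000)*(p^3) + (31/3000)*(p^3*r) + (1/100)*(p^3*q) + (2051/600)*(p^4) + (509/54000)*(t) + (647/54000)*(t*r) + (161/18000)*(t*r^2) + (31/3000)*(t*r^3) + (103/10800)*(t*q) + (31/3600)*(t*q*r) + (7/600)*(t*q*r^2) + (11629/18000)*(t*q^2) + (29/3000)*(t*q^2*r) + (1/100)*(t*q^3) + (319/27000)*(t*p) + (133/18000)*(t*p*r) + (17/1500)*(t*p*r^2) + (77/9000)*(t*p*q) + (19/1500)*(t*p*q*r) + (1/100)*(t*p*q^2) + (73/9000)*(t*p^2) + (133/1000)*(t*p^2*r) + (17/1500)*(t*p^2*q) + (4/375)*(t*p^3) + (23/2250)*(t^2) + (89/9000)*(t^2*r) + (1/100)*(t^2*r^2) + (37/3600)*(t^2*q) + (1/100)*(t^2*q*r) + (29/3000)*(t^2*q^2) + (7/750)*(t^2*p) + (269/3000)*(t^2*p*r) + (461/3000)*(t^2*p*q) + (31/3000)*(t^2*p^2) + (23/2250)*(t^3) + (397/1000)*(t^3*r) + (139/120)*(t^3*q) + (29/3000)*(t^3*p) + (1/100)*(t^4) + (181/18000)*(z) + (607/54000)*(z*r) + (59/6000)*(z*r^2) + (29/3000)*(z*r^3) + (307/27000)*(z*q) + (97/18000)*(z*q*r) + (11/1000)*(z*q*r^2) + (29/3600)*(z*q^2) + (31/3000)*(z*q^2*r) + (383/750)*(z*q^3) + (167/13500)*(z*p) + (137/18000)*(z*p*r) + (11/1000)*(z*p*r^2) + (859/400)*(z*p*q)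 + (4/375)*(z*p*q*r) + (67/125)*(z*p*q^2) + (169/18000)*(z*p^2) + (4/375)*(z*p^2*r) + (29/3000)*(z*p^2*q) + (413/1000)*(z*p^3) + (49/4000)*(z*t) + (107/18000)*(z*t*r) + (1/100)*(z*t*r^2) + (37/4500)*(z*t*q) + (7/600)*(z*t*q*r) + (4/375)*(z*t*q^2) + (1/150)*(z*t*p) + (11/1000)*(z*t*p*r) + (193/300)*(z*t*p*q) + (31/3000)*(z*t*p^2) + (73/9000)*(z*t^2) + (7/600)*(z*t^2*r) + (361/600)*(z*t^2*q) + (31/3000)*(z*t^2*p) + (31/3000)*(z*t^3) + (1183/108000)*(z^2) + (17/1500)*(z^2*r) + (7/750)*(z^2*r^2) + (199/18000)*(z^2*q) + (4/375)*(z^2*q*r) + (104/375)*(z^2*q^2) + (2263/18000)*(z^2*p) + (59/600)*(z^2*p*r) + (31/3000)*(z^2*p*q) + (31/3000)*(z^2*p^2) + (119/18000)*(z^2*t) + (37/3000)*(z^2*t*r) + (4/375)*(z^2*t*q) + (2923/3000)*(z^2*t*p) + (2153/3000)*(z^2*t^2) + (151/18000)*(z^3) + (13/1500)*(z^3*r) + (1771/1500)*(z^3*q) + (7087/3000)*(z^3*p) + (4/375)*(z^3*t) + (1/100)*(z^4) + (191/18000)*(y) + (113/10800)*(y*r) + (181/18000)*(y*r^2) + (29/3000)*(y*r^3) + (199/18000)*(y*q) + (53/6000)*(y*q*r) + (29/3000)*(y*q*r^2) + (1/125)*(y*q^2) + (7/750)*(y*q^2*r) + (1/100)*(y*q^3)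 + (49/4500)*(y*p) + (181/18000)*(y*p*r) + (29/3000)*(y*p*r^2) + (11/1200)*(y*p*q) + (13/1500)*(y*p*q*r) + (1901/750)*(y*p*q^2) + (193/18000)*(y*p^2) + (29/3000)*(y*p^2*r) + (9/1000)*(y*p^2*q) + (1469/3000)*(y*p^3) + (431/36000)*(y*t) + (107/18000)*(y*t*r) + (4/375)*(y*t*r^2) + (3/400)*(y*t*q) + (93/500)*(y*t*q*r) + (17/1500)*(y*t*q^2) + (53/9000)*(y*t*p) + (3/250)*(y*t*p*r) + (37/3000)*(y*t*p*q) + (109/600)*(y*t*p^2) + (2/225)*(y*t^2) + (4/375)*(y*t^2*r) + (29/3000)*(y*t^2*q) + (17/1500)*(y*t^2*p) + (1/100)*(y*t^3) + (137/13500)*(y*z) + (3/250)*(y*z*r) + (1/100)*(y*z*r^2) + (13/1200)*(y*z*q) + (1/75)*(y*z*q*r) + (3901/3000)*(y*z*q^2) + (11/1800)*(y*z*p) + (3/250)*(y*z*p*r) + (931/1500)*(y*z*p*q) + (7/600)*(y*z*p^2) + (1/150)*(y*z*t) + (7/600)*(y*z*t*r) + (23/750)*(y*z*t*q) + (17/1500)*(y*z*t*p) + (4/375)*(y*z*t^2) + (1/240)*(y*z^2) + (13/1500)*(y*z^2*r) + (11/1500)*(y*z^2*q) + (11/1000)*(y*z^2*p) + (47/3000)*(y*z^2*t) + (7/500)*(y*z^3) + (197/21600)*(y^2) + (23/2250)*(y^2*r) + (11/1000)*(y^2*r^2) + (43/4500)*(y^2*q) + (3/250)*(y^2*q*r)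 + (159/1000)*(y^2*q^2) + (173/18000)*(y^2*p) + (4/375)*(y^2*p*r) + (17/1500)*(y^2*p*q) + (12563/3000)*(y^2*p^2) + (71/9000)*(y^2*t) + (4/375)*(y^2*t*r) + (17/60)*(y^2*t*q) + (7/600)*(y^2*t*p) + (17/1500)*(y^2*t^2) + (3239/18000)*(y^2*z) + (23/3000)*(y^2*z*r) + (71/1000)*(y^2*z*q) + (4/375)*(y^2*z*p) + (1/60)*(y^2*z*t) + (539/3000)*(y^2*z^2) + (73/9000)*(y^3) + (9/1000)*(y^3*r) + (7/750)*(y^3*q) + (7/750)*(y^3*p) + (2267/3000)*(y^3*t) + (53/3000)*(y^3*z) + (19/100)*(y^4))"
    by (intro add_pos_nonneg add_nonneg_nonneg mult_nonneg_nonneg mult_pos_pos zero_le_power)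
       (use Ly_z Lz Lt_y Lp Lq Lr Ld Lx_p Lw Lx_t LR2 Lwq Lwr Gc0 Gd0 Ge0 Gf0 G10 G20 G30 y0 t0 in simp_all)
  show False using ident pos eq by simp
qed
lemma cert_C:
  fixes x y z t p q r d Gc Gd Ge Gf G1 G2 G3 :: real
  assumes hx: "x = 1 - y - z" and hd: "d = 1 - p - q - r"
    and hGc: "Gc = (1-x)*(3*x-1) - (1-p)*(3*p-1) - 2*d^2"
    and hGd: "Gd = (1-y)*(3*y-1) + 4*z*(x-t) + 2*(x*y+x*z+y*z) - (1-q)*(3*q-1) - 2*d^2"
    and hGe: "Ge = (1-z)*(3*z-1) + 4*y*(x-t) + 2*(x*y+x*z+y*z) - (1-r)*(3*r-1) - 2*d^2"
    and hGf: "Gf = x*y+x*z+y*z - (p*q+q*r+r*p + d/2)"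
    and hG1: "G1 = p*(p+d) - t^2"
    and hG2: "G2 = q*(q+d) - y^2"
    and hG3: "G3 = r*(r+d) - z^2"
    and Ly_z: "0 \<le> y - z"
    and Lz: "0 \<le> z"
    and Lt_y: "0 \<le> t - y"
    and Lp: "0 \<le> p"
    and Lq: "0 \<le> q"
    and Lr: "0 \<le> r"
    and Ld: "0 \<le> d"
    and Lx_p: "0 \<le> x - p"
    and Lw: "0 \<le> 4/3 - x - p"
    and Lx_t: "0 \<le> x - t"
    and LQ2: "0 \<le> q - 1/2"
    and Lwq: "0 \<le> 4/3 - x - q"
    and Lwr: "0 \<le> 4/3 - x - r"
    and Gc0: "0 < Gc"
    and Gd0: "0 < Gd"
    and Ge0: "0 < Ge"
    and Gf0: "0 < Gf"
    and G10: "0 < G1"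
    and G20: "0 < G2"
    and G30: "0 < G3"
    and eq: "t^2 = x^2 - 2*(x*y+x*z+y*z)"
  shows False
proof -
  have y0: "0 \<le> y" using Ly_z Lz by linarith
  have t0: "0 \<le> t" using Lt_y y0 by linarith
  have ident: "1*Gf + ((527/1500)*(Gc*(t - y)) + (1867/1000)*(Gc*(y - z)*(t - y)) + (12437/3000)*(Gc*(t - y)*(t - y)) + (5989/1500)*(Gc*(t - y)*(4/3 - x - p)) + (4141/3000)*(Gc*(t - y)*(4/3 - x - q)) + (1649/1500)*(Gd*(t - y)) + (23257/1500)*(Gd*(q - 1/2)) + (1087/750)*(Gd*(y - z)*(t - y)) + (338/375)*(Gd*(y - z)*(x - p)) + (7913/3000)*(Gd*(z)*(z)) + (767/600)*(Gd*(z)*(x - t)) + (619/1000)*(Gd*(t - y)*(t - y)) + (2021/3000)*(Gd*(t - y)*(r)) + (1443/1000)*(Gd*(t - y)*(x - p)) + (12349/1500)*(Gd*(q)*(x - p)) + (2507/1000)*(Gd*(q)*(x - t)) + (271/375)*(Gd*(r)*(d)) + (3547/3000)*(Gd*(r)*(x - p)) + (1807/3000)*(Gd*(r)*(x - t)) + (977/3000)*(Gd*(d)*(4/3 - x - p)) + (101/120)*(Gd*(d)*(4/3 - x - q)) + (507/500)*(Gd*(4/3 - x - p)*(x - t)) + (31/40)*(Gd*(x - t)*(q - 1/2)) + (469/200)*(Gd*(q - 1/2)*(4/3 - x - q)) + (2399/750)*(Ge*(z)*(t - y)) + (6193/3000)*(Ge*(t - y)*(x - p)) + (111/250)*(Ge*(t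 - y)*(4/3 - x - p)) + (796/375)*(Ge*(t - y)*(q - 1/2)) + (713/1000)*(Ge*(r)*(4/3 - x - q)) + (8093/3000)*(Ge*(d)*(4/3 - x - q)) + (106637/3000)*(Gf*(d)) + (969/200)*(Gf*(x - t)) + (15399/250)*(Gf*(4/3 - x - q)) + (15632/375)*(Gf*(y - z)*(z)) + (8273/600)*(Gf*(y - z)*(r)) + (21029/3000)*(Gf*(y - z)*(x - p)) + (27937/1500)*(Gf*(z)*(p)) + (2593/600)*(Gf*(z)*(4/3 - x - r)) + (1223/500)*(Gf*(r)*(4/3 - x - r)) + (2131/125)*(Gf*(d)*(x - p)) + (1079/60)*(Gf*(d)*(x - t)) + (19817/3000)*(Gf*(x - p)*(x - t)) + (5783/250)*(Gf*(x - p)*(4/3 - x - q)) + (2293/1500)*(Gf*(x - t)*(x - t)) + (14073/1000)*(G1*(r)) + (12019/750)*(G1*(z)*(z)) + (1367/1000)*(G1*(z)*(r)) + (4921/1500)*(G1*(z)*(q - 1/2)) + (17153/1500)*(G1*(r)*(d)) + (11207/750)*(G1*(r)*(x - p)) + (3877/600)*(G1*(r)*(4/3 - x - p)) + (6501/500)*(G1*(r)*(x - t)) + (9037/3000)*(G1*(r)*(4/3 - x - q)) + (889/375)*(G2*(z)*(t - y)) + (16583/3000)*(G3*(y - z)) + (4701/250)*(G3*(p)) + (18497/1000)*(G3*(y - z)*(y - z)) + (18169/1000)*(G3*(y - z)*(t - y)) + (2717/1000)*(G3*(y - z)*(p)) + (1577/3000)*(G3*(y - z)*(d)) + (9979/1500)*(G3*(y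 - z)*(x - p)) + (2483/1500)*(G3*(y - z)*(x - t)) + (21923/1000)*(G3*(y - z)*(4/3 - x - r)) + (4963/750)*(G3*(t - y)*(t - y)) + (22181/1000)*(G3*(p)*(d)) + (33851/3000)*(G3*(p)*(x - p)) + (1736/375)*(G3*(p)*(4/3 - x - p)) + (11999/750)*(G3*(d)*(4/3 - x - r)) + (2431/1000)*((t - y)*(t - y)) + (3557/750)*((t - y)*(r)) + (1379/1500)*((t - y)*(4/3 - x - p)) + (4403/3000)*((d)*(4/3 - x - q)) + (3311/750)*((y - z)*(y - z)*(d)) + (2087/250)*((y - z)*(y - z)*(4/3 - x - q)) + (2077/300)*((y - z)*(t - y)*(d)) + (33367/3000)*((y - z)*(t - y)*(4/3 - x - q)) + (10879/3000)*((y - z)*(d)*(d)) + (9991/500)*((z)*(t - y)*(q - 1/2)) + (154/125)*((t - y)*(t - y)*(d)) + (3779/3000)*((t - y)*(t - y)*(x - p)) + (14653/3000)*((t - y)*(t - y)*(4/3 - x - p)) + (1939/1000)*((t - y)*(t - y)*(x - t)) + (933/1000)*((t - y)*(q)*(q - 1/2)) + (517/600)*((t - y)*(r)*(4/3 - x - p)) + (26267/1500)*((t - y)*(d)*(4/3 - x - q)) + (3151/750)*((t - y)*(x - t)*(q - 1/2)) + (5989/200)*((p)*(r)*(4/3 - x - q)) + (35699/3000)*((d)*(d)*(d)) + (863/200)*((d)*(x - t)*(4/3 - x - q)) + (24679/3000)*((d)*(4/3 - x - q)*(4/3 - x - q)) + (4829/3000)*((4/3 - x - p)*(q - 1/2)*(4/3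 - x - q)) + (10609/3000)*((y - z)*(y - z)*(y - z)*(y - z)) + (7247/1500)*((y - z)*(y - z)*(y - z)*(t - y)) + (703/1500)*((y - z)*(y - z)*(y - z)*(r)) + (5457/1000)*((y - z)*(y - z)*(y - z)*(d)) + (2491/1000)*((y - z)*(y - z)*(y - z)*(x - t)) + (539/375)*((y - z)*(y - z)*(z)*(4/3 - x - q)) + (3184/375)*((y - z)*(y - z)*(p)*(d)) + (3427/3000)*((y - z)*(y - z)*(r)*(4/3 - x - q)) + (57/20)*((y - z)*(y - z)*(r)*(4/3 - x - r)) + (2433/1000)*((y - z)*(y - z)*(d)*(d)) + (9479/3000)*((y - z)*(y - z)*(d)*(x - t)) + (8099/3000)*((y - z)*(y - z)*(d)*(4/3 - x - r)) + (2312/375)*((y - z)*(y - z)*(x - t)*(4/3 - x - q)) + (20833/1500)*((y - z)*(z)*(z)*(z)) + (58/25)*((y - z)*(z)*(r)*(x - t)) + (778/125)*((y - z)*(t - y)*(r)*(x - p)) + (19811/3000)*((y - z)*(t - y)*(r)*(x - t)) + (349/75)*((y - z)*(t - y)*(d)*(x - p)) + (3271/750)*((y - z)*(t - y)*(x - p)*(x - p)) + (16439/3000)*((y - z)*(t - y)*(x - p)*(x - t)) + (477/500)*((y - z)*(t - y)*(x - t)*(x - t)) + (39577/3000)*((y - z)*(t - y)*(x - t)*(4/3 - x - q)) + (7801/500)*((y - z)*(p)*(p)*(4/3 - x - q)) + (35453/3000)*((y - z)*(p)*(r)*(4/3 - x - p)) + (17999/3000)*((y - z)*(p)*(d)*(d))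 + (149/15)*((y - z)*(r)*(d)*(4/3 - x - q)) + (3073/750)*((y - z)*(r)*(d)*(4/3 - x - r)) + (1397/375)*((y - z)*(r)*(q - 1/2)*(4/3 - x - r)) + (7033/3000)*((y - z)*(r)*(4/3 - x - r)*(4/3 - x - r)) + (1151/600)*((y - z)*(d)*(d)*(d)) + (5197/1000)*((y - z)*(d)*(d)*(4/3 - x - r)) + (147/125)*((y - z)*(q - 1/2)*(4/3 - x - q)*(4/3 - x - q)) + (1639/1500)*((y - z)*(4/3 - x - q)*(4/3 - x - q)*(4/3 - x - r)) + (12909/1000)*((z)*(t - y)*(q)*(x - p)) + (859/375)*((z)*(t - y)*(q)*(4/3 - x - p)) + (219/250)*((z)*(d)*(4/3 - x - q)*(4/3 - x - r)) + (4351/3000)*((t - y)*(t - y)*(t - y)*(d)) + (391/250)*((t - y)*(t - y)*(r)*(d)) + (857/250)*((t - y)*(t - y)*(r)*(x - p)) + (2479/300)*((t - y)*(t - y)*(r)*(x - t)) + (1237/1500)*((t - y)*(t - y)*(d)*(4/3 - x - q)) + (3823/500)*((t - y)*(t - y)*(x - p)*(x - p)) + (4997/1500)*((t - y)*(t - y)*(x - p)*(x - t)) + (2097/1000)*((t - y)*(t - y)*(x - p)*(4/3 - x - q)) + (1691/300)*((t - y)*(t - y)*(4/3 - x - p)*(x - t)) + (71/120)*((t - y)*(p)*(p)*(d)) + (2661/500)*((t - y)*(q)*(q)*(4/3 - x - p)) + (1552/375)*((t - y)*(q)*(r)*(x - t)) + (3751/3000)*((t - y)*(q)*(4/3 - x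 - p)*(x - t)) + (1951/1500)*((t - y)*(d)*(d)*(x - p)) + (2729/1500)*((t - y)*(x - p)*(x - p)*(4/3 - x - q)) + (5167/3000)*((t - y)*(x - t)*(x - t)*(4/3 - x - r)) + (17187/1000)*((p)*(p)*(r)*(d)) + (1279/250)*((p)*(p)*(r)*(4/3 - x - q)) + (7901/1500)*((p)*(r)*(d)*(4/3 - x - r)) + (7211/1500)*((p)*(r)*(x - t)*(4/3 - x - q)) + (563/100)*((p)*(r)*(4/3 - x - q)*(4/3 - x - r)) + (13571/1500)*((p)*(d)*(4/3 - x - q)*(4/3 - x - r)) + (14537/3000)*((p)*(4/3 - x - p)*(q - 1/2)*(4/3 - x - q)) + (16109/750)*((r)*(r)*(r)*(q - 1/2)) + (4141/750)*((r)*(r)*(d)*(4/3 - x - q)) + (30727/3000)*((r)*(r)*(q - 1/2)*(q - 1/2)) + (17177/3000)*((r)*(d)*(d)*(d)) + (7621/1500)*((r)*(d)*(x - p)*(4/3 - x - q)) + (2618/375)*((r)*(4/3 - x - q)*(4/3 - x - r)*(4/3 - x - r)) + (2071/600)*((d)*(d)*(d)*(4/3 - x - q)) + (559/600)*((d)*(d)*(x - t)*(4/3 - x - q)) + (1031/300)*((d)*(d)*(q - 1/2)*(q - 1/2)) + (3063/500)*((d)*(x - p)*(x - p)*(4/3 - x - q)) + (7973/1000)*((d)*(x - t)*(x - t)*(4/3 - x - q)) + (8819/1500)*((d)*(x - t)*(4/3 - x - q)*(4/3 - x - r)) + (4433/1000)*((d)*(4/3 - x - q)*(4/3 - x - q)*(4/3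 - x - r)) + (2611/1000)*((d)*(4/3 - x - q)*(4/3 - x - r)*(4/3 - x - r)) + (4627/3000)*((4/3 - x - p)*(q - 1/2)*(4/3 - x - q)*(4/3 - x - r)) + (628/375)*((4/3 - x - p)*(4/3 - x - q)*(4/3 - x - q)*(4/3 - x - r)) + (153/40)*((x - t)*(q - 1/2)*(q - 1/2)*(4/3 - x - q)) + (2744/375)*((q - 1/2)*(4/3 - x - q)*(4/3 - x - q)*(4/3 - x - r))) + ((9931/972000) + (1637/162000)*(r) + (1133/108000)*(r^2) + (83/9000)*(r^3) + (12841/3000)*(r^4) + (3293/324000)*(q) + (499/54000)*(q*r) + (1/100)*(q*r^2) + (11/1000)*(q*r^3) + (259/27000)*(q^2) + (17/1500)*(q^2*r) + (7/750)*(q^2*r^2) + (173/18000)*(q^3) + (7/750)*(q^3*r) + (31/3000)*(q^4) + (203/20250)*(p) + (269/27000)*(p*r) + (13/1500)*(p*r^2) + (23933/3000)*(p*r^3) + (49/5400)*(p*q) + (71/6000)*(p*q*r) + (11/1000)*(p*q*r^2) + (101/9000)*(p*q^2) + (1/120)*(p*q^2*r) + (29/3000)*(p*q^3) + (67/6750)*(p^2) + (9/1000)*(p^2*r) + (17/1500)*(p^2*r^2) + (203/18000)*(p^2*q) + (31/3000)*(p^2*q*r) + (9/1000)*(p^2*q^2) + (43/4500)*(p^3) + (4/375)*(p^3*r) + (113/3000)*(p^3*q) + (977/1500)*(p^4) + (1021/108000)*(t) + (281/27000)*(t*r) + (1/100)*(t*r^2) + (107/750)*(t*r^3) + (1199/108000)*(t*q)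 + (1/120)*(t*q*r) + (31/3000)*(t*q*r^2) + (19/2000)*(t*q^2) + (4/375)*(t*q^2*r) + (1/100)*(t*q^3) + (619/54000)*(t*p) + (53/6000)*(t*p*r) + (697/3000)*(t*p*r^2) + (133/18000)*(t*p*q) + (7/600)*(t*p*q*r) + (11/1000)*(t*p*q^2) + (31/3600)*(t*p^2) + (307/1500)*(t*p^2*r) + (17/1500)*(t*p^2*q) + (31/3000)*(t*p^3) + (1/100)*(t^2) + (43/4500)*(t^2*r) + (1/100)*(t^2*r^2) + (4/375)*(t^2*q) + (31/3000)*(t^2*q*r) + (29/3000)*(t^2*q^2) + (89/9000)*(t^2*p) + (31/3000)*(t^2*p*r) + (29/3000)*(t^2*p*q) + (37/1000)*(t^2*p^2) + (11/1125)*(t^3) + (1/100)*(t^3*r) + (1/100)*(t^3*q) + (47/3000)*(t^3*p) + (41/1500)*(t^4) + (487/54000)*(z) + (533/54000)*(z*r) + (17/1800)*(z*r^2) + (29/3000)*(z*r^3) + (997/108000)*(z*q) + (37/3600)*(z*q*r) + (9/1000)*(z*q*r^2) + (109/9000)*(z*q^2) + (4/375)*(z*q^2*r) + (1/100)*(z*q^3) + (29/2700)*(z*p) + (167/18000)*(z*p*r) + (887/375)*(z*p*r^2) + (89/9000)*(z*p*q) + (13/1500)*(z*p*q*r) + (1/100)*(z*p*q^2) + (167/18000)*(z*p^2) + (29/3000)*(z*p^2*r) + (7/750)*(z*p^2*q) + (29279/3000)*(z*p^3) + (29/2400)*(z*t) + (11/1200)*(z*t*r) + (107/375)*(z*t*r^2)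 + (7/720)*(z*t*q) + (4/375)*(z*t*q*r) + (13/1500)*(z*t*q^2) + (131/18000)*(z*t*p) + (17/1500)*(z*t*p*r) + (31/3000)*(z*t*p*q) + (7/600)*(z*t*p^2) + (83/9000)*(z*t^2) + (31/3000)*(z*t^2*r) + (31/3000)*(z*t^2*q) + (1/100)*(z*t^2*p) + (4/375)*(z*t^3) + (427/36000)*(z^2) + (4/375)*(z^2*r) + (11/1000)*(z^2*r^2) + (91/9000)*(z^2*q) + (13/1500)*(z^2*q*r) + (23/3000)*(z^2*q^2) + (179/18000)*(z^2*p) + (11/1000)*(z^2*p*r) + (29/3000)*(z^2*p*q) + (717/1000)*(z^2*p^2) + (29/4500)*(z^2*t) + (31/3000)*(z^2*t*r) + (3/250)*(z^2*t*q) + (17/1500)*(z^2*t*p) + (17/1500)*(z^2*t^2) + (49/6000)*(z^3) + (1/100)*(z^3*r) + (3/250)*(z^3*q) + (29/3000)*(z^3*p) + (17/1500)*(z^3*t) + (29/3000)*(z^4) + (749/81000)*(y) + (173/18000)*(y*r) + (53/6000)*(y*r^2) + (29/3000)*(y*r^3) + (67/7200)*(y*q) + (101/9000)*(y*q*r) + (1/100)*(y*q*r^2) + (3/250)*(y*q^2) + (31/3000)*(y*q^2*r) + (1/100)*(y*q^3) + (101/10800)*(y*p) + (19/1800)*(y*p*r) + (2597/3000)*(y*p*r^2) + (17/1500)*(y*p*q) + (1/125)*(y*p*q*r) + (29/3000)*(y*p*q^2) + (199/18000)*(y*p^2) + (13/1500)*(y*p^2*r) + (1/125)*(y*p^2*q)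 + (7/750)*(y*p^3) + (79/7200)*(y*t) + (37/3600)*(y*t*r) + (1/100)*(y*t*r^2) + (143/18000)*(y*t*q) + (1/100)*(y*t*q*r) + (11/1000)*(y*t*q^2) + (163/18000)*(y*t*p) + (4/375)*(y*t*p*r) + (11/1000)*(y*t*p*q) + (29/3000)*(y*t*p^2) + (41/4500)*(y*t^2) + (29/3000)*(y*t^2*r) + (29/3000)*(y*t^2*q) + (4/375)*(y*t^2*p) + (31/3000)*(y*t^3) + (4/375)*(y*z) + (19/2000)*(y*z*r) + (13/1000)*(y*z*r^2) + (199/18000)*(y*z*q) + (1/100)*(y*z*q*r) + (11/1500)*(y*z*q^2) + (1/80)*(y*z*p) + (1/75)*(y*z*p*r) + (11/1000)*(y*z*p*q) + (17/1500)*(y*z*p^2) + (77/9000)*(y*z*t) + (31/3000)*(y*z*t*r) + (11/1000)*(y*z*t*q) + (4/375)*(y*z*t*p) + (9/1000)*(y*z*t^2) + (49/6000)*(y*z^2) + (13/1500)*(y*z^2*r) + (11/1000)*(y*z^2*q) + (3/500)*(y*z^2*p) + (4/375)*(y*z^2*t) + (11/1000)*(y*z^3) + (127/12000)*(y^2) + (173/18000)*(y^2*r) + (17/1500)*(y^2*r^2) + (47/4500)*(y^2*q) + (1/120)*(y^2*q*r) + (11/1500)*(y^2*q^2) + (13/1125)*(y^2*p) + (4/375)*(y^2*p*r) + (7/750)*(y^2*p*q) + (11/1000)*(y^2*p^2) + (181/18000)*(y^2*t) + (11/1000)*(y^2*t*r) + (17/1500)*(y^2*t*q) + (4/375)*(y^2*t*p)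 + (31/3000)*(y^2*t^2) + (3/400)*(y^2*z) + (9/1000)*(y^2*z*r) + (37/3000)*(y^2*z*q) + (1/150)*(y^2*z*p) + (37/3000)*(y^2*z*t) + (17/1500)*(y^2*z^2) + (181/18000)*(y^3) + (4/375)*(y^3*r) + (11/1000)*(y^3*q) + (1/125)*(y^3*p) + (7/750)*(y^3*t) + (1/100)*(y^3*z) + (1/100)*(y^4)) + (0 - (29729/1500) + (52877/3000)*r + (6959/3000)*q + (24013/750)*p + (1023/200)*t - (197/25)*z + (1097/500)*y - (44/125)*r^2 + (5791/600)*q*r - (227/200)*q^2 - (49/75)*p*r + (12649/1500)*p*q - (7943/750)*p^2 - (197/125)*t*r + (4321/3000)*t*q - (113/15)*t*p - (41/1500)*t^2 + (188/375)*z*r + (33857/3000)*z*q - (5767/600)*z*p + (12007/3000)*z*t + (2624/375)*z^2 - (10543/1000)*y*r - (1667/1500)*y*q - (1913/125)*y*p - (143/375)*y*t + (1011/100)*y*z + (7669/1000)*y^2)*(t^2 - (x^2 - 2*(x*y+x*z+y*z))) = 0"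
    unfolding hGc hGd hGe hGf hG1 hG2 hG3 hx hd by algebra
  have pos: "0 < 1*Gf + ((527/1500)*(Gc*(t - y)) + (1867/1000)*(Gc*(y - z)*(t - y)) + (12437/3000)*(Gc*(t - y)*(t - y)) + (5989/1500)*(Gc*(t - y)*(4/3 - x - p)) + (4141/3000)*(Gc*(t - y)*(4/3 - x - q)) + (1649/1500)*(Gd*(t - y)) + (23257/1500)*(Gd*(q - 1/2)) + (1087/750)*(Gd*(y - z)*(t - y)) + (338/375)*(Gd*(y - z)*(x - p)) + (7913/3000)*(Gd*(z)*(z)) + (767/600)*(Gd*(z)*(x - t)) + (619/1000)*(Gd*(t - y)*(t - y)) + (2021/3000)*(Gd*(t - y)*(r)) + (1443/1000)*(Gd*(t - y)*(x - p)) + (12349/1500)*(Gd*(q)*(x - p)) + (2507/1000)*(Gd*(q)*(x - t)) + (271/375)*(Gd*(r)*(d)) + (3547/3000)*(Gd*(r)*(x - p)) + (1807/3000)*(Gd*(r)*(x - t)) + (977/3000)*(Gd*(d)*(4/3 - x - p)) + (101/120)*(Gd*(d)*(4/3 - x - q)) + (507/500)*(Gd*(4/3 - x - p)*(x - t)) + (31/40)*(Gd*(x - t)*(q - 1/2)) + (469/200)*(Gd*(q - 1/2)*(4/3 - x - q)) + (2399/750)*(Ge*(z)*(t - y)) + (6193/3000)*(Ge*(t - y)*(x - p)) + (111/250)*(Ge*(t - y)*(4/3 - x - p)) + (796/375)*(Ge*(t - y)*(q - 1/2)) + (713/1000)*(Ge*(r)*(4/3 - x - q)) + (8093/3000)*(Ge*(d)*(4/3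 - x - q)) + (106637/3000)*(Gf*(d)) + (969/200)*(Gf*(x - t)) + (15399/250)*(Gf*(4/3 - x - q)) + (15632/375)*(Gf*(y - z)*(z)) + (8273/600)*(Gf*(y - z)*(r)) + (21029/3000)*(Gf*(y - z)*(x - p)) + (27937/1500)*(Gf*(z)*(p)) + (2593/600)*(Gf*(z)*(4/3 - x - r)) + (1223/500)*(Gf*(r)*(4/3 - x - r)) + (2131/125)*(Gf*(d)*(x - p)) + (1079/60)*(Gf*(d)*(x - t)) + (19817/3000)*(Gf*(x - p)*(x - t)) + (5783/250)*(Gf*(x - p)*(4/3 - x - q)) + (2293/1500)*(Gf*(x - t)*(x - t)) + (14073/1000)*(G1*(r)) + (12019/750)*(G1*(z)*(z)) + (1367/1000)*(G1*(z)*(r)) + (4921/1500)*(G1*(z)*(q - 1/2)) + (17153/1500)*(G1*(r)*(d)) + (11207/750)*(G1*(r)*(x - p)) + (3877/600)*(G1*(r)*(4/3 - x - p)) + (6501/500)*(G1*(r)*(x - t)) + (9037/3000)*(G1*(r)*(4/3 - x - q)) + (889/375)*(G2*(z)*(t - y)) + (16583/3000)*(G3*(y - z)) + (4701/250)*(G3*(p)) + (18497/1000)*(G3*(y - z)*(y - z)) + (18169/1000)*(G3*(y - z)*(t - y)) + (2717/1000)*(G3*(y - z)*(p)) + (1577/3000)*(G3*(y - z)*(d)) + (9979/1500)*(G3*(y - z)*(x - p)) + (2483/1500)*(G3*(y - z)*(x - t)) + (21923/1000)*(G3*(y - z)*(4/3 - x - r)) + (4963/750)*(G3*(t - y)*(t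 - y)) + (22181/1000)*(G3*(p)*(d)) + (33851/3000)*(G3*(p)*(x - p)) + (1736/375)*(G3*(p)*(4/3 - x - p)) + (11999/750)*(G3*(d)*(4/3 - x - r)) + (2431/1000)*((t - y)*(t - y)) + (3557/750)*((t - y)*(r)) + (1379/1500)*((t - y)*(4/3 - x - p)) + (4403/3000)*((d)*(4/3 - x - q)) + (3311/750)*((y - z)*(y - z)*(d)) + (2087/250)*((y - z)*(y - z)*(4/3 - x - q)) + (2077/300)*((y - z)*(t - y)*(d)) + (33367/3000)*((y - z)*(t - y)*(4/3 - x - q)) + (10879/3000)*((y - z)*(d)*(d)) + (9991/500)*((z)*(t - y)*(q - 1/2)) + (154/125)*((t - y)*(t - y)*(d)) + (3779/3000)*((t - y)*(t - y)*(x - p)) + (14653/3000)*((t - y)*(t - y)*(4/3 - x - p)) + (1939/1000)*((t - y)*(t - y)*(x - t)) + (933/1000)*((t - y)*(q)*(q - 1/2)) + (517/600)*((t - y)*(r)*(4/3 - x - p)) + (26267/1500)*((t - y)*(d)*(4/3 - x - q)) + (3151/750)*((t - y)*(x - t)*(q - 1/2)) + (5989/200)*((p)*(r)*(4/3 - x - q)) + (35699/3000)*((d)*(d)*(d)) + (863/200)*((d)*(x - t)*(4/3 - x - q)) + (24679/3000)*((d)*(4/3 - x - q)*(4/3 - x - q)) + (4829/3000)*((4/3 - x - p)*(q - 1/2)*(4/3 - x - q)) + (10609/3000)*((y - z)*(y - z)*(y - z)*(y - z)) + (7247/1500)*((y - z)*(y - z)*(y - z)*(t - y)) + (703/1500)*((y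 - z)*(y - z)*(y - z)*(r)) + (5457/1000)*((y - z)*(y - z)*(y - z)*(d)) + (2491/1000)*((y - z)*(y - z)*(y - z)*(x - t)) + (539/375)*((y - z)*(y - z)*(z)*(4/3 - x - q)) + (3184/375)*((y - z)*(y - z)*(p)*(d)) + (3427/3000)*((y - z)*(y - z)*(r)*(4/3 - x - q)) + (57/20)*((y - z)*(y - z)*(r)*(4/3 - x - r)) + (2433/1000)*((y - z)*(y - z)*(d)*(d)) + (9479/3000)*((y - z)*(y - z)*(d)*(x - t)) + (8099/3000)*((y - z)*(y - z)*(d)*(4/3 - x - r)) + (2312/375)*((y - z)*(y - z)*(x - t)*(4/3 - x - q)) + (20833/1500)*((y - z)*(z)*(z)*(z)) + (58/25)*((y - z)*(z)*(r)*(x - t)) + (778/125)*((y - z)*(t - y)*(r)*(x - p)) + (19811/3000)*((y - z)*(t - y)*(r)*(x - t)) + (349/75)*((y - z)*(t - y)*(d)*(x - p)) + (3271/750)*((y - z)*(t - y)*(x - p)*(x - p)) + (16439/3000)*((y - z)*(t - y)*(x - p)*(x - t)) + (477/500)*((y - z)*(t - y)*(x - t)*(x - t)) + (39577/3000)*((y - z)*(t - y)*(x - t)*(4/3 - x - q)) + (7801/500)*((y - z)*(p)*(p)*(4/3 - x - q)) + (35453/3000)*((y - z)*(p)*(r)*(4/3 - x - p)) + (17999/3000)*((y - z)*(p)*(d)*(d)) + (149/15)*((y - z)*(r)*(d)*(4/3 - x - q)) + (3073/750)*((y - z)*(r)*(d)*(4/3 - x - r)) + (1397/375)*((y - z)*(r)*(q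 - 1/2)*(4/3 - x - r)) + (7033/3000)*((y - z)*(r)*(4/3 - x - r)*(4/3 - x - r)) + (1151/600)*((y - z)*(d)*(d)*(d)) + (5197/1000)*((y - z)*(d)*(d)*(4/3 - x - r)) + (147/125)*((y - z)*(q - 1/2)*(4/3 - x - q)*(4/3 - x - q)) + (1639/1500)*((y - z)*(4/3 - x - q)*(4/3 - x - q)*(4/3 - x - r)) + (12909/1000)*((z)*(t - y)*(q)*(x - p)) + (859/375)*((z)*(t - y)*(q)*(4/3 - x - p)) + (219/250)*((z)*(d)*(4/3 - x - q)*(4/3 - x - r)) + (4351/3000)*((t - y)*(t - y)*(t - y)*(d)) + (391/250)*((t - y)*(t - y)*(r)*(d)) + (857/250)*((t - y)*(t - y)*(r)*(x - p)) + (2479/300)*((t - y)*(t - y)*(r)*(x - t)) + (1237/1500)*((t - y)*(t - y)*(d)*(4/3 - x - q)) + (3823/500)*((t - y)*(t - y)*(x - p)*(x - p)) + (4997/1500)*((t - y)*(t - y)*(x - p)*(x - t)) + (2097/1000)*((t - y)*(t - y)*(x - p)*(4/3 - x - q)) + (1691/300)*((t - y)*(t - y)*(4/3 - x - p)*(x - t)) + (71/120)*((t - y)*(p)*(p)*(d)) + (2661/500)*((t - y)*(q)*(q)*(4/3 - x - p)) + (1552/375)*((t - y)*(q)*(r)*(x - t)) + (3751/3000)*((t - y)*(q)*(4/3 - x - p)*(x - t)) + (1951/1500)*((t - y)*(d)*(d)*(x - p)) + (2729/1500)*((t - y)*(x - p)*(x - p)*(4/3 - x - q)) + (5167/3000)*((t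 - y)*(x - t)*(x - t)*(4/3 - x - r)) + (17187/1000)*((p)*(p)*(r)*(d)) + (1279/250)*((p)*(p)*(r)*(4/3 - x - q)) + (7901/1500)*((p)*(r)*(d)*(4/3 - x - r)) + (7211/1500)*((p)*(r)*(x - t)*(4/3 - x - q)) + (563/100)*((p)*(r)*(4/3 - x - q)*(4/3 - x - r)) + (13571/1500)*((p)*(d)*(4/3 - x - q)*(4/3 - x - r)) + (14537/3000)*((p)*(4/3 - x - p)*(q - 1/2)*(4/3 - x - q)) + (16109/750)*((r)*(r)*(r)*(q - 1/2)) + (4141/750)*((r)*(r)*(d)*(4/3 - x - q)) + (30727/3000)*((r)*(r)*(q - 1/2)*(q - 1/2)) + (17177/3000)*((r)*(d)*(d)*(d)) + (7621/1500)*((r)*(d)*(x - p)*(4/3 - x - q)) + (2618/375)*((r)*(4/3 - x - q)*(4/3 - x - r)*(4/3 - x - r)) + (2071/600)*((d)*(d)*(d)*(4/3 - x - q)) + (559/600)*((d)*(d)*(x - t)*(4/3 - x - q)) + (1031/300)*((d)*(d)*(q - 1/2)*(q - 1/2)) + (3063/500)*((d)*(x - p)*(x - p)*(4/3 - x - q)) + (7973/1000)*((d)*(x - t)*(x - t)*(4/3 - x - q)) + (8819/1500)*((d)*(x - t)*(4/3 - x - q)*(4/3 - x - r)) + (4433/1000)*((d)*(4/3 - x - q)*(4/3 - x - q)*(4/3 - x - r)) + (2611/1000)*((d)*(4/3 - x - q)*(4/3 - x - r)*(4/3 - x - r)) + (4627/3000)*((4/3 - x - p)*(q - 1/2)*(4/3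 - x - q)*(4/3 - x - r)) + (628/375)*((4/3 - x - p)*(4/3 - x - q)*(4/3 - x - q)*(4/3 - x - r)) + (153/40)*((x - t)*(q - 1/2)*(q - 1/2)*(4/3 - x - q)) + (2744/375)*((q - 1/2)*(4/3 - x - q)*(4/3 - x - q)*(4/3 - x - r))) + ((9931/972000) + (1637/162000)*(r) + (1133/108000)*(r^2) + (83/9000)*(r^3) + (12841/3000)*(r^4) + (3293/324000)*(q) + (499/54000)*(q*r) + (1/100)*(q*r^2) + (11/1000)*(q*r^3) + (259/27000)*(q^2) + (17/1500)*(q^2*r) + (7/750)*(q^2*r^2) + (173/18000)*(q^3) + (7/750)*(q^3*r) + (31/3000)*(q^4) + (203/20250)*(p) + (269/27000)*(p*r) + (13/1500)*(p*r^2) + (23933/3000)*(p*r^3) + (49/5400)*(p*q) + (71/6000)*(p*q*r) + (11/1000)*(p*q*r^2) + (101/9000)*(p*q^2) + (1/120)*(p*q^2*r) + (29/3000)*(p*q^3) + (67/6750)*(p^2) + (9/1000)*(p^2*r) + (17/1500)*(p^2*r^2) + (203/18000)*(p^2*q) + (31/3000)*(p^2*q*r) + (9/1000)*(p^2*q^2) + (43/4500)*(p^3) + (4/375)*(p^3*r) + (113/3000)*(p^3*q) + (977/1500)*(p^4) + (1021/108000)*(t) + (281/27000)*(t*r) + (1/100)*(t*r^2) + (107/750)*(t*r^3) + (1199/108000)*(t*q) + (1/120)*(t*q*r) + (31/3000)*(t*q*r^2) + (19/2000)*(t*q^2) + (4/375)*(t*q^2*r) + (1/100)*(t*q^3) +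 (619/54000)*(t*p) + (53/6000)*(t*p*r) + (697/3000)*(t*p*r^2) + (133/18000)*(t*p*q) + (7/600)*(t*p*q*r) + (11/1000)*(t*p*q^2) + (31/3600)*(t*p^2) + (307/1500)*(t*p^2*r) + (17/1500)*(t*p^2*q) + (31/3000)*(t*p^3) + (1/100)*(t^2) + (43/4500)*(t^2*r) + (1/100)*(t^2*r^2) + (4/375)*(t^2*q) + (31/3000)*(t^2*q*r) + (29/3000)*(t^2*q^2) + (89/9000)*(t^2*p) + (31/3000)*(t^2*p*r) + (29/3000)*(t^2*p*q) + (37/1000)*(t^2*p^2) + (11/1125)*(t^3) + (1/100)*(t^3*r) + (1/100)*(t^3*q) + (47/3000)*(t^3*p) + (41/1500)*(t^4) + (487/54000)*(z) + (533/54000)*(z*r) + (17/1800)*(z*r^2) + (29/3000)*(z*r^3) + (997/108000)*(z*q) + (37/3600)*(z*q*r) + (9/1000)*(z*q*r^2) + (109/9000)*(z*q^2) + (4/375)*(z*q^2*r) + (1/100)*(z*q^3) + (29/2700)*(z*p) + (167/18000)*(z*p*r) + (887/375)*(z*p*r^2) + (89/9000)*(z*p*q) + (13/1500)*(z*p*q*r) + (1/100)*(z*p*q^2) + (167/18000)*(z*p^2) + (29/3000)*(z*p^2*r) + (7/750)*(z*p^2*q) + (29279/3000)*(z*p^3) + (29/2400)*(z*t) + (11/1200)*(z*t*r) + (107/375)*(z*t*r^2) + (7/720)*(z*t*q) + (4/375)*(z*t*q*r) + (13/1500)*(z*t*q^2) + (131/18000)*(z*t*p) + (17/1500)*(z*t*p*r)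 + (31/3000)*(z*t*p*q) + (7/600)*(z*t*p^2) + (83/9000)*(z*t^2) + (31/3000)*(z*t^2*r) + (31/3000)*(z*t^2*q) + (1/100)*(z*t^2*p) + (4/375)*(z*t^3) + (427/36000)*(z^2) + (4/375)*(z^2*r) + (11/1000)*(z^2*r^2) + (91/9000)*(z^2*q) + (13/1500)*(z^2*q*r) + (23/3000)*(z^2*q^2) + (179/18000)*(z^2*p) + (11/1000)*(z^2*p*r) + (29/3000)*(z^2*p*q) + (717/1000)*(z^2*p^2) + (29/4500)*(z^2*t) + (31/3000)*(z^2*t*r) + (3/250)*(z^2*t*q) + (17/1500)*(z^2*t*p) + (17/1500)*(z^2*t^2) + (49/6000)*(z^3) + (1/100)*(z^3*r) + (3/250)*(z^3*q) + (29/3000)*(z^3*p) + (17/1500)*(z^3*t) + (29/3000)*(z^4) + (749/81000)*(y) + (173/18000)*(y*r) + (53/6000)*(y*r^2) + (29/3000)*(y*r^3) + (67/7200)*(y*q) + (101/9000)*(y*q*r) + (1/100)*(y*q*r^2) + (3/250)*(y*q^2) + (31/3000)*(y*q^2*r) + (1/100)*(y*q^3) + (101/10800)*(y*p) + (19/1800)*(y*p*r) + (2597/3000)*(y*p*r^2) + (17/1500)*(y*p*q) + (1/125)*(y*p*q*r) + (29/3000)*(y*p*q^2) + (199/18000)*(y*p^2) + (13/1500)*(y*p^2*r) + (1/125)*(y*p^2*q) + (7/750)*(y*p^3) + (79/7200)*(y*t) + (37/3600)*(y*t*r) + (1/100)*(y*t*r^2) + (143/18000)*(y*t*q) + (1/100)*(y*t*q*r)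 + (11/1000)*(y*t*q^2) + (163/18000)*(y*t*p) + (4/375)*(y*t*p*r) + (11/1000)*(y*t*p*q) + (29/3000)*(y*t*p^2) + (41/4500)*(y*t^2) + (29/3000)*(y*t^2*r) + (29/3000)*(y*t^2*q) + (4/375)*(y*t^2*p) + (31/3000)*(y*t^3) + (4/375)*(y*z) + (19/2000)*(y*z*r) + (13/1000)*(y*z*r^2) + (199/18000)*(y*z*q) + (1/100)*(y*z*q*r) + (11/1500)*(y*z*q^2) + (1/80)*(y*z*p) + (1/75)*(y*z*p*r) + (11/1000)*(y*z*p*q) + (17/1500)*(y*z*p^2) + (77/9000)*(y*z*t) + (31/3000)*(y*z*t*r) + (11/1000)*(y*z*t*q) + (4/375)*(y*z*t*p) + (9/1000)*(y*z*t^2) + (49/6000)*(y*z^2) + (13/1500)*(y*z^2*r) + (11/1000)*(y*z^2*q) + (3/500)*(y*z^2*p) + (4/375)*(y*z^2*t) + (11/1000)*(y*z^3) + (127/12000)*(y^2) + (173/18000)*(y^2*r) + (17/1500)*(y^2*r^2) + (47/4500)*(y^2*q) + (1/120)*(y^2*q*r) + (11/1500)*(y^2*q^2) + (13/1125)*(y^2*p) + (4/375)*(y^2*p*r) + (7/750)*(y^2*p*q) + (11/1000)*(y^2*p^2) + (181/18000)*(y^2*t) + (11/1000)*(y^2*t*r) + (17/1500)*(y^2*t*q) + (4/375)*(y^2*t*p) + (31/3000)*(y^2*t^2) + (3/400)*(y^2*z) + (9/1000)*(y^2*z*r) + (37/3000)*(y^2*z*q) + (1/150)*(y^2*z*p)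 + (37/3000)*(y^2*z*t) + (17/1500)*(y^2*z^2) + (181/18000)*(y^3) + (4/375)*(y^3*r) + (11/1000)*(y^3*q) + (1/125)*(y^3*p) + (7/750)*(y^3*t) + (1/100)*(y^3*z) + (1/100)*(y^4))"
    by (intro add_pos_nonneg add_nonneg_nonneg mult_nonneg_nonneg mult_pos_pos zero_le_power)
       (use Ly_z Lz Lt_y Lp Lq Lr Ld Lx_p Lw Lx_t LQ2 Lwq Lwr Gc0 Gd0 Ge0 Gf0 G10 G20 G30 y0 t0 in simp_all)
  show False using ident pos eq by simp
qed
lemma cert_D:
  fixes x y z t p q r d Gc Gd Ge Gf G1 G2 G3 :: real
  assumes hx: "x = 1 - y - z" and hd: "d = 1 - p - q - r"
    and hGc: "Gc = (1-x)*(3*x-1) - (1-p)*(3*p-1) - 2*d^2"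
    and hGd: "Gd = (1-y)*(3*y-1) + 4*z*(x-t) + 2*(x*y+x*z+y*z) - (1-q)*(3*q-1) - 2*d^2"
    and hGe: "Ge = (1-z)*(3*z-1) + 4*y*(x-t) + 2*(x*y+x*z+y*z) - (1-r)*(3*r-1) - 2*d^2"
    and hGf: "Gf = x*y+x*z+y*z - (p*q+q*r+r*p + d/2)"
    and hG1: "G1 = p*(p+d) - t^2"
    and hG2: "G2 = q*(q+d) - y^2"
    and hG3: "G3 = r*(r+d) - z^2"
    and Ly_z: "0 \<le> y - z"
    and Lz: "0 \<le> z"
    and Lt_y: "0 \<le> t - y"
    and Lp: "0 \<le> p"
    and Lq: "0 \<le> q"
    and Lr: "0 \<le> r"
    and Ld: "0 \<le> d"
    and Lx_p: "0 \<le> x - p"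
    and Lw: "0 \<le> 4/3 - x - p"
    and Lx_t: "0 \<le> x - t"
    and Lp2: "0 \<le> 1/2 - p"
    and Lq2: "0 \<le> 1/2 - q"
    and Lr2: "0 \<le> 1/2 - r"
    and Gc0: "0 < Gc"
    and Gd0: "0 < Gd"
    and Ge0: "0 < Ge"
    and Gf0: "0 < Gf"
    and G10: "0 < G1"
    and G20: "0 < G2"
    and G30: "0 < G3"
    and eq: "t^2 = x^2 - 2*(x*y+x*z+y*z)"
  shows False
proof -
  have y0: "0 \<le> y" using Ly_z Lz by linarith
  have t0: "0 \<le> t" using Lt_y y0 by linarith
  have ident: "1*Gf + ((17/1500)*(Gc*(t - y)) + (23/1500)*(Gc*(y - z)*(t - y)) + (1/60)*(Gc*(t - y)*(t - y)) + (1/200)*(Gc*(d)*(d)) + (1/120)*(Gd*(t - y)) + (31/3000)*(Gd*(y - z)*(p)) + (41/3000)*(Gd*(y - z)*(4/3 - x - p)) + (37/3000)*(Gd*(t - y)*(p)) + (23/1500)*(Gd*(t - y)*(4/3 - x - p)) + (29/3000)*(Ge*(t - y)) + (19/3000)*(Ge*(t - y)*(p)) + (13/1000)*(Ge*(t - y)*(4/3 - x - p)) + (10943/3000)*(Gf*(p)) + (373/1500)*(Gf*(q)) + (151/600)*(Gf*(r)) + (191/120)*(Gf*(x - p)) + (271/150)*(Gf*(4/3 - x - p)) + (87/500)*(Gf*(x - t)) + (77/3000)*(Gf*(x - p)*(x - p)) + (89/3000)*(Gf*(x - p)*(x - t)) + (23/1500)*(Gf*(4/3 - x - p)*(4/3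 - x - p)) + (19/125)*(G1*(1/2 - p)) + (499/3000)*(G2*(1/2 - q)) + (1/25)*(G2*(x - t)*(1/2 - q)) + (251/1500)*(G3*(1/2 - r)) + (1/25)*(G3*(x - t)*(1/2 - r)) + (13/250)*((y - z)) + (103/750)*((t - y)) + (691/1000)*((y - z)*(y - z)) + (259/500)*((y - z)*(t - y)) + (7/100)*((y - z)*(1/2 - q)) + (1583/3000)*((t - y)*(t - y)) + (49/600)*((t - y)*(d)) + (109/3000)*((p)*(1/2 - p)) + (11/500)*((y - z)*(y - z)*(d)) + (173/1500)*((y - z)*(t - y)*(x - p)) + (773/3000)*((y - z)*(t - y)*(x - t)) + (17/600)*((y - z)*(q)*(d)) + (43/1000)*((y - z)*(q)*(x - p)) + (73/3000)*((y - z)*(r)*(4/3 - x - p)) + (17/3000)*((y - z)*(x - p)*(1/2 - r)) + (113/3000)*((y - z)*(4/3 - x - p)*(4/3 - x - p)) + (7/250)*((y - z)*(4/3 - x - p)*(1/2 - q)) + (67/3000)*((y - z)*(x - t)*(1/2 - r)) + (14/125)*((t - y)*(t - y)*(x - p)) + (29/120)*((t - y)*(t - y)*(x - t)) + (11/200)*((t - y)*(4/3 - x - p)*(4/3 - x - p)) + (61/750)*((p)*(p)*(1/2 - p)) + (91/750)*((p)*(d)*(4/3 - x - p)) + (89/3000)*((q)*(q)*(1/2 - q)) + (31/1000)*((r)*(r)*(1/2 - r)) + (23/750)*((d)*(d)*(x - p)) + (29/600)*((d)*(d)*(x - t)) + (193/3000)*((d)*(4/3 - x - p)*(4/3 - x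 - p)) + (91/750)*((x - p)*(1/2 - q)*(1/2 - r)) + (64/375)*((4/3 - x - p)*(1/2 - q)*(1/2 - r)) + (4537/750)*((1/2 - p)*(1/2 - q)*(1/2 - r)) + (73/3000)*((y - z)*(t - y)*(q)*(q)) + (29/1500)*((y - z)*(t - y)*(1/2 - r)*(1/2 - r)) + (1/50)*((y - z)*(q)*(q)*(x - p)) + (11/600)*((y - z)*(r)*(r)*(4/3 - x - p)) + (1/125)*((y - z)*(d)*(x - t)*(x - t)) + (1/125)*((t - y)*(t - y)*(p)*(x - p)) + (2/75)*((t - y)*(t - y)*(q)*(q)) + (13/600)*((t - y)*(t - y)*(r)*(r)) + (7/750)*((t - y)*(t - y)*(x - p)*(4/3 - x - p)) + (1/100)*((t - y)*(d)*(d)*(d)) + (7/500)*((t - y)*(d)*(x - t)*(x - t)) + (59/3000)*((t - y)*(4/3 - x - p)*(4/3 - x - p)*(4/3 - x - p)) + (29/3000)*((t - y)*(4/3 - x - p)*(4/3 - x - p)*(x - t)) + (7/200)*((p)*(p)*(d)*(d)) + (37/750)*((p)*(d)*(4/3 - x - p)*(4/3 - x - p)) + (8/375)*((p)*(x - p)*(x - p)*(x - p)) + (17/1500)*((p)*(x - t)*(x - t)*(1/2 - p)) + (7/300)*((q)*(q)*(4/3 - x - p)*(1/2 - q)) + (11/600)*((q)*(x - t)*(x - t)*(1/2 - q)) + (1/50)*((r)*(r)*(4/3 - x - p)*(1/2 - r)) + (53/3000)*((r)*(x - t)*(x - t)*(1/2 - r)) + (23/1500)*((d)*(d)*(x - t)*(x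 - t)) + (1/40)*((d)*(d)*(1/2 - q)*(1/2 - r)) + (61/3000)*((d)*(4/3 - x - p)*(4/3 - x - p)*(4/3 - x - p))) + ((3323/324000) + (1547/162000)*(r) + (1/96)*(r^2) + (61/6000)*(r^3) + (1/100)*(r^4) + (1493/162000)*(q) + (569/54000)*(q*r) + (71/6000)*(q*r^2) + (3/200)*(q*r^3) + (77/7200)*(q^2) + (59/6000)*(q^2*r) + (1/100)*(q^2*r^2) + (179/18000)*(q^3) + (3/200)*(q^3*r) + (1/100)*(q^4) + (187/20250)*(p) + (583/54000)*(p*r) + (1/100)*(p*r^2) + (1/50)*(p*r^3) + (583/54000)*(p*q) + (1253/180)*(p*q*r) + (7/100)*(p*q*r^2) + (29/3000)*(p*q^2) + (7/100)*(p*q^2*r) + (1/60)*(p*q^3) + (1189/108000)*(p^2) + (89/9000)*(p^2*r) + (1/100)*(p^2*r^2) + (89/9000)*(p^2*q) + (9/250)*(p^2*q*r) + (1/100)*(p^2*q^2) + (161/18000)*(p^3) + (1/100)*(p^3*r) + (1/100)*(p^3*q) + (31/3000)*(p^4) + (1589/162000)*(t) + (193/18000)*(t*r) + (83/9000)*(t*r^2) + (1/100)*(t*r^3) + (21/2000)*(t*q) + (17/1800)*(t*q*r) + (7/100)*(t*q*r^2) + (43/4500)*(t*q^2) + (7/100)*(t*q^2*r) + (1/100)*(t*q^3) + (23/2250)*(t*p) + (479/18000)*(t*p*r) + (53/750)*(t*p*r^2) + (743/18000)*(t*p*q) + (51/1000)*(t*p*q*r) + (179/3000)*(t*p*q^2)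 + (169/18000)*(t*p^2) + (21/1000)*(t*p^2*r) + (21/1000)*(t*p^2*q) + (31/3000)*(t*p^3) + (269/27000)*(t^2) + (23/2000)*(t^2*r) + (1/75)*(t^2*r^2) + (61/6000)*(t^2*q) + (19/500)*(t^2*q*r) + (1/100)*(t^2*q^2) + (1/100)*(t^2*p) + (33/1000)*(t^2*p*r) + (17/500)*(t^2*p*q) + (1/100)*(t^2*p^2) + (31/3000)*(t^3) + (17/1500)*(t^3*r) + (1/100)*(t^3*q) + (1/50)*(t^3*p) + (1/100)*(t^4) + (109/10800)*(z) + (181/18000)*(z*r) + (13/1500)*(z*r^2) + (1/50)*(z*r^3) + (199/18000)*(z*q) + (3/250)*(z*q*r) + (1/25)*(z*q*r^2) + (2/225)*(z*q^2) + (1/25)*(z*q^2*r) + (7/300)*(z*q^3) + (61/6000)*(z*p) + (313/18000)*(z*p*r) + (17/600)*(z*p*r^2) + (181/18000)*(z*p*q) + (191/3000)*(z*p*q*r) + (1/60)*(z*p*q^2) + (179/18000)*(z*p^2) + (13/500)*(z*p^2*r) + (13/500)*(z*p^2*q) + (33/1000)*(z*p^3) + (571/54000)*(z*t) + (11/1200)*(z*t*r) + (11/1000)*(z*t*r^2) + (19/2000)*(z*t*q) + (61/3000)*(z*t*q*r) + (31/3000)*(z*t*q^2) + (163/18000)*(z*t*p) + (61/3000)*(z*t*p*r) + (61/3000)*(z*t*p*q) + (11/750)*(z*t*p^2) + (31/3000)*(z*t^2) + (17/600)*(z*t^2*r) + (31/1500)*(z*t^2*q) + (19/1000)*(z*t^2*p)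 + (1/100)*(z*t^3) + (32/3375)*(z^2) + (13/1200)*(z^2*r) + (31/3000)*(z^2*r^2) + (11/1200)*(z^2*q) + (7/750)*(z^2*q*r) + (4/375)*(z^2*q^2) + (193/9000)*(z^2*p) + (19/1500)*(z^2*p*r) + (29/3000)*(z^2*p*q) + (1/100)*(z^2*p^2) + (19/1125)*(z^2*t) + (23/500)*(z^2*t*r) + (1/100)*(z^2*t*q) + (17/1500)*(z^2*t*p) + (13/500)*(z^2*t^2) + (13/1125)*(z^3) + (41/1500)*(z^3*r) + (31/3000)*(z^3*q) + (37/1000)*(z^3*p) + (23/500)*(z^3*t) + (127/600)*(z^4) + (323/32400)*(y) + (59/6000)*(y*r) + (41/4500)*(y*r^2) + (1/100)*(y*r^3) + (193/18000)*(y*q) + (1/100)*(y*q*r) + (1/100)*(y*q*r^2) + (83/9000)*(y*q^2) + (1/100)*(y*q^2*r) + (1/75)*(y*q^3) + (169/18000)*(y*p) + (193/18000)*(y*p*r) + (21/1000)*(y*p*r^2) + (41/3600)*(y*p*q) + (47/3000)*(y*p*q*r) + (131/3000)*(y*p*q^2) + (209/18000)*(y*p^2) + (1/125)*(y*p^2*r) + (1/125)*(y*p^2*q) + (7/750)*(y*p^3) + (187/18000)*(y*t) + (59/6000)*(y*t*r) + (31/3000)*(y*t*r^2) + (97/6000)*(y*t*q) + (29/3000)*(y*t*q*r) + (29/3000)*(y*t*q^2) + (167/18000)*(y*t*p) + (29/3000)*(y*t*p*r) + (29/3000)*(y*t*p*q) + (31/3000)*(y*t*p^2) + (89/9000)*(y*t^2)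 + (7/300)*(y*t^2*r) + (23/750)*(y*t^2*q) + (11/1000)*(y*t^2*p) + (1/100)*(y*t^3) + (517/54000)*(y*z) + (29/750)*(y*z*r) + (31/1000)*(y*z*r^2) + (9/1000)*(y*z*q) + (2/25)*(y*z*q*r) + (91/3000)*(y*z*q^2) + (101/9000)*(y*z*p) + (23/300)*(y*z*p*r) + (109/1500)*(y*z*p*q) + (167/3000)*(y*z*p^2) + (4/375)*(y*z*t) + (4/375)*(y*z*t*r) + (2/125)*(y*z*t*q) + (29/1000)*(y*z*t*p) + (29/3000)*(y*z*t^2) + (41/3000)*(y*z^2) + (1/24)*(y*z^2*r) + (31/3000)*(y*z^2*q) + (9/200)*(y*z^2*p) + (19/375)*(y*z^2*t) + (1397/1500)*(y*z^3) + (263/27000)*(y^2) + (53/6000)*(y^2*r) + (11/1000)*(y^2*r^2) + (39/2000)*(y^2*q) + (4/375)*(y^2*q*r) + (13/1000)*(y^2*q^2) + (7/600)*(y^2*p) + (7/500)*(y^2*p*r) + (11/1000)*(y^2*p*q) + (41/750)*(y^2*p^2) + (29/3000)*(y^2*t) + (1/100)*(y^2*t*r) + (27/500)*(y^2*t*q) + (17/600)*(y^2*t*p) + (31/1000)*(y^2*t^2) + (347/9000)*(y^2*z) + (4/375)*(y^2*z*r) + (133/3000)*(y^2*z*q) + (7/500)*(y^2*z*p) + (11/750)*(y^2*z*t) + (3943/3000)*(y^2*z^2) + (91/9000)*(y^3) + (31/3000)*(y^3*r) + (17/600)*(y^3*q) + (7/600)*(y^3*p) + (1/100)*(y^3*t)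 + (917/1000)*(y^3*z) + (563/3000)*(y^4)) + (0 - (399/500) - (253/3000)*r - (1/12)*q - (11/200)*p + (163/750)*t + (379/3000)*z + (159/1000)*y + (1/1500)*r^2 - (1/500)*q*r - (1/3000)*q^2 + (3/1000)*p*r + (1/500)*p*q - (67/3000)*p^2 + (1/375)*t*r + (1/250)*t*q - (3/500)*t*p - (1/100)*t^2 - (1/120)*z*r - (1/1500)*z*q - (67/3000)*z*p - (1/100)*z*t + (223/3000)*z^2 - (1/750)*y*r - (13/1500)*y*q - (27/1000)*y*p - (1/100)*y*t + (121/600)*y*z + (3/50)*y^2)*(t^2 - (x^2 - 2*(x*y+x*z+y*z))) = 0"
    unfolding hGc hGd hGe hGf hG1 hG2 hG3 hx hd by algebra
  have pos: "0 < 1*Gf + ((17/1500)*(Gc*(t - y)) + (23/1500)*(Gc*(y - z)*(t - y)) + (1/60)*(Gc*(t - y)*(t - y)) + (1/200)*(Gc*(d)*(d)) + (1/120)*(Gd*(t - y)) + (31/3000)*(Gd*(y - z)*(p)) + (41/3000)*(Gd*(y - z)*(4/3 - x - p)) + (37/3000)*(Gd*(t - y)*(p)) + (23/1500)*(Gd*(t - y)*(4/3 - x - p)) + (29/3000)*(Ge*(t - y)) + (19/3000)*(Ge*(t - y)*(p)) + (13/1000)*(Ge*(t - y)*(4/3 - x - p)) + (10943/3000)*(Gf*(p)) + (373/1500)*(Gf*(q)) + (151/600)*(Gf*(r)) + (191/120)*(Gf*(x - p)) + (271/150)*(Gf*(4/3 - x - p)) + (87/500)*(Gf*(x - t)) +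 (77/3000)*(Gf*(x - p)*(x - p)) + (89/3000)*(Gf*(x - p)*(x - t)) + (23/1500)*(Gf*(4/3 - x - p)*(4/3 - x - p)) + (19/125)*(G1*(1/2 - p)) + (499/3000)*(G2*(1/2 - q)) + (1/25)*(G2*(x - t)*(1/2 - q)) + (251/1500)*(G3*(1/2 - r)) + (1/25)*(G3*(x - t)*(1/2 - r)) + (13/250)*((y - z)) + (103/750)*((t - y)) + (691/1000)*((y - z)*(y - z)) + (259/500)*((y - z)*(t - y)) + (7/100)*((y - z)*(1/2 - q)) + (1583/3000)*((t - y)*(t - y)) + (49/600)*((t - y)*(d)) + (109/3000)*((p)*(1/2 - p)) + (11/500)*((y - z)*(y - z)*(d)) + (173/1500)*((y - z)*(t - y)*(x - p)) + (773/3000)*((y - z)*(t - y)*(x - t)) + (17/600)*((y - z)*(q)*(d)) + (43/1000)*((y - z)*(q)*(x - p)) + (73/3000)*((y - z)*(r)*(4/3 - x - p)) + (17/3000)*((y - z)*(x - p)*(1/2 - r)) + (113/3000)*((y - z)*(4/3 - x - p)*(4/3 - x - p)) + (7/250)*((y - z)*(4/3 - x - p)*(1/2 - q)) + (67/3000)*((y - z)*(x - t)*(1/2 - r)) + (14/125)*((t - y)*(t - y)*(x - p)) + (29/120)*((t - y)*(t - y)*(x - t)) + (11/200)*((t - y)*(4/3 - x - p)*(4/3 - x - p)) + (61/750)*((p)*(p)*(1/2 - p)) + (91/750)*((p)*(d)*(4/3 - x - p)) + (89/3000)*((q)*(q)*(1/2 - q)) + (31/1000)*((r)*(r)*(1/2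 - r)) + (23/750)*((d)*(d)*(x - p)) + (29/600)*((d)*(d)*(x - t)) + (193/3000)*((d)*(4/3 - x - p)*(4/3 - x - p)) + (91/750)*((x - p)*(1/2 - q)*(1/2 - r)) + (64/375)*((4/3 - x - p)*(1/2 - q)*(1/2 - r)) + (4537/750)*((1/2 - p)*(1/2 - q)*(1/2 - r)) + (73/3000)*((y - z)*(t - y)*(q)*(q)) + (29/1500)*((y - z)*(t - y)*(1/2 - r)*(1/2 - r)) + (1/50)*((y - z)*(q)*(q)*(x - p)) + (11/600)*((y - z)*(r)*(r)*(4/3 - x - p)) + (1/125)*((y - z)*(d)*(x - t)*(x - t)) + (1/125)*((t - y)*(t - y)*(p)*(x - p)) + (2/75)*((t - y)*(t - y)*(q)*(q)) + (13/600)*((t - y)*(t - y)*(r)*(r)) + (7/750)*((t - y)*(t - y)*(x - p)*(4/3 - x - p)) + (1/100)*((t - y)*(d)*(d)*(d)) + (7/500)*((t - y)*(d)*(x - t)*(x - t)) + (59/3000)*((t - y)*(4/3 - x - p)*(4/3 - x - p)*(4/3 - x - p)) + (29/3000)*((t - y)*(4/3 - x - p)*(4/3 - x - p)*(x - t)) + (7/200)*((p)*(p)*(d)*(d)) + (37/750)*((p)*(d)*(4/3 - x - p)*(4/3 - x - p)) + (8/375)*((p)*(x - p)*(x - p)*(x - p)) + (17/1500)*((p)*(x - t)*(x - t)*(1/2 - p)) + (7/300)*((q)*(q)*(4/3 - x - p)*(1/2 - q)) + (11/600)*((q)*(x - t)*(x - t)*(1/2 - q)) + (1/50)*((r)*(r)*(4/3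 - x - p)*(1/2 - r)) + (53/3000)*((r)*(x - t)*(x - t)*(1/2 - r)) + (23/1500)*((d)*(d)*(x - t)*(x - t)) + (1/40)*((d)*(d)*(1/2 - q)*(1/2 - r)) + (61/3000)*((d)*(4/3 - x - p)*(4/3 - x - p)*(4/3 - x - p))) + ((3323/324000) + (1547/162000)*(r) + (1/96)*(r^2) + (61/6000)*(r^3) + (1/100)*(r^4) + (1493/162000)*(q) + (569/54000)*(q*r) + (71/6000)*(q*r^2) + (3/200)*(q*r^3) + (77/7200)*(q^2) + (59/6000)*(q^2*r) + (1/100)*(q^2*r^2) + (179/18000)*(q^3) + (3/200)*(q^3*r) + (1/100)*(q^4) + (187/20250)*(p) + (583/54000)*(p*r) + (1/100)*(p*r^2) + (1/50)*(p*r^3) + (583/54000)*(p*q) + (1253/180)*(p*q*r) + (7/100)*(p*q*r^2) + (29/3000)*(p*q^2) + (7/100)*(p*q^2*r) + (1/60)*(p*q^3) + (1189/108000)*(p^2) + (89/9000)*(p^2*r) + (1/100)*(p^2*r^2) + (89/9000)*(p^2*q) + (9/250)*(p^2*q*r) + (1/100)*(p^2*q^2) + (161/18000)*(p^3) + (1/100)*(p^3*r) + (1/100)*(p^3*q) + (31/3000)*(p^4) + (1589/162000)*(t) + (193/18000)*(t*r) + (83/9000)*(t*r^2) + (1/100)*(t*r^3) + (21/2000)*(t*q) + (17/1800)*(t*q*r) + (7/100)*(t*q*r^2) + (43/4500)*(t*q^2) + (7/100)*(t*q^2*r) + (1/100)*(t*q^3) + (23/2250)*(t*p) + (479/18000)*(t*p*r)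 + (53/750)*(t*p*r^2) + (743/18000)*(t*p*q) + (51/1000)*(t*p*q*r) + (179/3000)*(t*p*q^2) + (169/18000)*(t*p^2) + (21/1000)*(t*p^2*r) + (21/1000)*(t*p^2*q) + (31/3000)*(t*p^3) + (269/27000)*(t^2) + (23/2000)*(t^2*r) + (1/75)*(t^2*r^2) + (61/6000)*(t^2*q) + (19/500)*(t^2*q*r) + (1/100)*(t^2*q^2) + (1/100)*(t^2*p) + (33/1000)*(t^2*p*r) + (17/500)*(t^2*p*q) + (1/100)*(t^2*p^2) + (31/3000)*(t^3) + (17/1500)*(t^3*r) + (1/100)*(t^3*q) + (1/50)*(t^3*p) + (1/100)*(t^4) + (109/10800)*(z) + (181/18000)*(z*r) + (13/1500)*(z*r^2) + (1/50)*(z*r^3) + (199/18000)*(z*q) + (3/250)*(z*q*r) + (1/25)*(z*q*r^2) + (2/225)*(z*q^2) + (1/25)*(z*q^2*r) + (7/300)*(z*q^3) + (61/6000)*(z*p) + (313/18000)*(z*p*r) + (17/600)*(z*p*r^2) + (181/18000)*(z*p*q) + (191/3000)*(z*p*q*r) + (1/60)*(z*p*q^2) + (179/18000)*(z*p^2) + (13/500)*(z*p^2*r) + (13/500)*(z*p^2*q) + (33/1000)*(z*p^3) + (571/54000)*(z*t) + (11/1200)*(z*t*r) + (11/1000)*(z*t*r^2) + (19/2000)*(z*t*q) + (61/3000)*(z*t*q*r) + (31/3000)*(z*t*q^2) + (163/18000)*(z*t*p) + (61/3000)*(z*t*p*r) + (61/3000)*(z*t*p*q) + (11/750)*(z*t*p^2)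 + (31/3000)*(z*t^2) + (17/600)*(z*t^2*r) + (31/1500)*(z*t^2*q) + (19/1000)*(z*t^2*p) + (1/100)*(z*t^3) + (32/3375)*(z^2) + (13/1200)*(z^2*r) + (31/3000)*(z^2*r^2) + (11/1200)*(z^2*q) + (7/750)*(z^2*q*r) + (4/375)*(z^2*q^2) + (193/9000)*(z^2*p) + (19/1500)*(z^2*p*r) + (29/3000)*(z^2*p*q) + (1/100)*(z^2*p^2) + (19/1125)*(z^2*t) + (23/500)*(z^2*t*r) + (1/100)*(z^2*t*q) + (17/1500)*(z^2*t*p) + (13/500)*(z^2*t^2) + (13/1125)*(z^3) + (41/1500)*(z^3*r) + (31/3000)*(z^3*q) + (37/1000)*(z^3*p) + (23/500)*(z^3*t) + (127/600)*(z^4) + (323/32400)*(y) + (59/6000)*(y*r) + (41/4500)*(y*r^2) + (1/100)*(y*r^3) + (193/18000)*(y*q) + (1/100)*(y*q*r) + (1/100)*(y*q*r^2) + (83/9000)*(y*q^2) + (1/100)*(y*q^2*r) + (1/75)*(y*q^3) + (169/18000)*(y*p) + (193/18000)*(y*p*r) + (21/1000)*(y*p*r^2) + (41/3600)*(y*p*q) + (47/3000)*(y*p*q*r) + (131/3000)*(y*p*q^2) + (209/18000)*(y*p^2) + (1/125)*(y*p^2*r) + (1/125)*(y*p^2*q) + (7/750)*(y*p^3) + (187/18000)*(y*t) + (59/6000)*(y*t*r) + (31/3000)*(y*t*r^2) + (97/6000)*(y*t*q) + (29/3000)*(y*t*q*r) + (29/3000)*(y*t*q^2) + (167/18000)*(y*t*p)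 + (29/3000)*(y*t*p*r) + (29/3000)*(y*t*p*q) + (31/3000)*(y*t*p^2) + (89/9000)*(y*t^2) + (7/300)*(y*t^2*r) + (23/750)*(y*t^2*q) + (11/1000)*(y*t^2*p) + (1/100)*(y*t^3) + (517/54000)*(y*z) + (29/750)*(y*z*r) + (31/1000)*(y*z*r^2) + (9/1000)*(y*z*q) + (2/25)*(y*z*q*r) + (91/3000)*(y*z*q^2) + (101/9000)*(y*z*p) + (23/300)*(y*z*p*r) + (109/1500)*(y*z*p*q) + (167/3000)*(y*z*p^2) + (4/375)*(y*z*t) + (4/375)*(y*z*t*r) + (2/125)*(y*z*t*q) + (29/1000)*(y*z*t*p) + (29/3000)*(y*z*t^2) + (41/3000)*(y*z^2) + (1/24)*(y*z^2*r) + (31/3000)*(y*z^2*q) + (9/200)*(y*z^2*p) + (19/375)*(y*z^2*t) + (1397/1500)*(y*z^3) + (263/27000)*(y^2) + (53/6000)*(y^2*r) + (11/1000)*(y^2*r^2) + (39/2000)*(y^2*q) + (4/375)*(y^2*q*r) + (13/1000)*(y^2*q^2) + (7/600)*(y^2*p) + (7/500)*(y^2*p*r) + (11/1000)*(y^2*p*q) + (41/750)*(y^2*p^2) + (29/3000)*(y^2*t) + (1/100)*(y^2*t*r) + (27/500)*(y^2*t*q) + (17/600)*(y^2*t*p) + (31/1000)*(y^2*t^2) + (347/9000)*(y^2*z) + (4/375)*(y^2*z*r) + (133/3000)*(y^2*z*q) + (7/500)*(y^2*z*p) + (11/750)*(y^2*z*t) + (3943/3000)*(y^2*z^2) + (91/9000)*(y^3)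 + (31/3000)*(y^3*r) + (17/600)*(y^3*q) + (7/600)*(y^3*p) + (1/100)*(y^3*t) + (917/1000)*(y^3*z) + (563/3000)*(y^4))"
    by (intro add_pos_nonneg add_nonneg_nonneg mult_nonneg_nonneg mult_pos_pos zero_le_power)
       (use Ly_z Lz Lt_y Lp Lq Lr Ld Lx_p Lw Lx_t Lp2 Lq2 Lr2 Gc0 Gd0 Ge0 Gf0 G10 G20 G30 y0 t0 in simp_all)
  show False using ident pos eq by simp
qed
lemma sq_less_base:
  fixes a b :: real
  assumes "a^2 < b^2" "0 \<le> b"
  shows "a < b"
  using assms power_less_imp_less_base by blast

lemma reduced:
  fixes a1 a2 x y z p q r d :: real
  assumes sum: "x + y + z = 1" and x0: "0 \<le> x" and z0: "0 \<le> z" and yz: "z \<le> y"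
    and dom: "2*x^2 + z^2 \<ge> 1"
    and ha1: "a1 = x^2 + y^2" and ha2: "a2 = x^2 + z^2"
    and p0: "0 \<le> p" and q0: "0 \<le> q" and r0: "0 \<le> r" and d0: "0 \<le> d"
    and s1: "p + q + r + d = 1"
    and H1: "p * (p + d) > a1 + a2 - 1"
    and H2: "q * (q + d) > a1 + (1 - x^2) - 1"
    and H3: "r * (r + d) > a2 + (1 - x^2) - 1"
    and H4: "p * (p + d) + q * (q + d) + r * (r + d) > a1 + a2 + (1 - x^2) - 1"
    and H5: "p^2 + 2*q^2 + 2*r^2 + 2*q*d + 2*r*d > 2*a1 + 2*a2 + 3*(1 - x^2) - 3"
    and H6: "2*p^2 + q^2 + 2*r^2 + 2*p*d + 2*r*d > 2*a1 + 3*a2 + 2*(1 - x^2) - 3"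
    and H7: "2*p^2 + 2*q^2 + r^2 + 2*p*d + 2*q*d > 3*a1 + 2*a2 + 2*(1 - x^2) - 3"
  shows False
proof -
  have hx: "x = 1 - y - z" using sum by linarith
  have hd: "d = 1 - p - q - r" using s1 by linarith
  have y0: "0 \<le> y" using z0 yz by linarith
  define A where "A = x^2 - 2*(x*y+x*z+y*z)"
  have Ay: "A - y^2 = 2*x^2 + z^2 - 1" unfolding A_def hx by (simp add: power2_eq_square field_simps)
  have Ay2: "y^2 \<le> A" using Ay dom by linarith
  have A0: "0 \<le> A" using Ay2 by (smt (verit) zero_le_power2)
  define t where "t = sqrt A"
  have tt: "t^2 = x^2 - 2*(x*y+x*z+y*z)" using A0 unfolding t_def A_def by simp
  have t0: "0 \<le> t" unfolding t_def using A0 by simp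
  have ty: "y \<le> t"
  proof -
    have "sqrt (y^2) \<le> sqrt A" using Ay2 by (rule real_sqrt_le_mono)
    then show ?thesis using y0 unfolding t_def by simp
  qed
  have tx: "t \<le> x"
  proof -
    have "0 \<le> x*y+x*z+y*z" using x0 y0 z0 by (simp add: add_nonneg_nonneg mult_nonneg_nonneg)
    then have "A \<le> x^2" unfolding A_def by simp
    then have "sqrt A \<le> sqrt (x^2)" by (rule real_sqrt_le_mono)
    then show ?thesis using x0 unfolding t_def by simp
  qed
  have G1: "0 < p*(p+d) - t^2"
  proof -
    have "a1 + a2 - 1 = x^2 - 2*(x*y+x*z+y*z)" unfolding ha1 ha2 hx by (simp add: power2_eq_square field_simps)
    then show ?thesis using H1 tt by linarith
  qed
  have e2: "a1 + (1 - x^2) - 1 = y^2" using ha1 by (simp add: algebra_simps)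
  have e3: "a2 + (1 - x^2) - 1 = z^2" using ha2 by (simp add: algebra_simps)
  have e4: "a1 + a2 + (1 - x^2) - 1 = x^2+y^2+z^2" using ha1 ha2 by (simp add: algebra_simps)
  have e5: "2*a1 + 2*a2 + 3*(1 - x^2) - 3 = x^2+2*y^2+2*z^2" using ha1 ha2 by (simp add: algebra_simps)
  have e6: "2*a1 + 3*a2 + 2*(1 - x^2) - 3 = 3*x^2+2*y^2+3*z^2-1" using ha1 ha2 by (simp add: algebra_simps)
  have e7: "3*a1 + 2*a2 + 2*(1 - x^2) - 3 = 3*x^2+3*y^2+2*z^2-1" using ha1 ha2 by (simp add: algebra_simps)
  have G2: "0 < q*(q+d) - y^2" using H2 e2 by linarith
  have G3: "0 < r*(r+d) - z^2" using H3 e3 by linarith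
  have H4': "p*(p+d) + q*(q+d) + r*(r+d) > x^2+y^2+z^2" using H4 e4 by linarith
  have H5': "p^2+2*q^2+2*r^2+2*q*d+2*r*d-(x^2+2*y^2+2*z^2) > 0" using H5 e5 by linarith
  have H6': "2*p^2+q^2+2*r^2+2*p*d+2*r*d-(3*x^2+2*y^2+3*z^2-1) > 0" using H6 e6 by linarith
  have H7': "2*p^2+2*q^2+r^2+2*p*d+2*q*d-(3*x^2+3*y^2+2*z^2-1) > 0" using H7 e7 by linarith
  have ha: "y < q + d/2"
  proof (rule sq_less_base)
    have "(q + d/2)^2 = q*(q+d) + d^2/4" by (simp add: power2_eq_square algebra_simps)
    moreover have "0 \<le> d^2/4" by simp
    ultimately show "y^2 < (q + d/2)^2" using G2 by linarith
    show "0 \<le> q + d/2" using q0 d0 by linarith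
  qed
  have hb: "z < r + d/2"
  proof (rule sq_less_base)
    have "(r + d/2)^2 = r*(r+d) + d^2/4" by (simp add: power2_eq_square algebra_simps)
    moreover have "0 \<le> d^2/4" by simp
    ultimately show "z^2 < (r + d/2)^2" using G3 by linarith
    show "0 \<le> r + d/2" using r0 d0 by linarith
  qed
  have hp: "t < p + d/2"
  proof (rule sq_less_base)
    have "(p + d/2)^2 = p*(p+d) + d^2/4" by (simp add: power2_eq_square algebra_simps)
    moreover have "0 \<le> d^2/4" by simp
    ultimately show "t^2 < (p + d/2)^2" using G1 by linarith
    show "0 \<le> p + d/2" using p0 d0 by linarith
  qed
  have xp: "0 < x - p" using ha hb hx hd by linarith
  have xq: "0 < x - q" using hp hb hx hd ty by linarith
  have xr: "0 < x - r" using hp ha hx hd ty yz by linarith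
  have Qp: "0 < q*(q+d)" using G2 by (smt (verit) zero_le_power2)
  have Rp: "0 < r*(r+d)" using G3 by (smt (verit) zero_le_power2)
  have AM1: "0 < q*r + d*(q+r)/2 - y*z"
  proof -
    have M0: "0 \<le> q*r + d*(q+r)/2" using mult_nonneg_nonneg[OF q0 r0] mult_nonneg_nonneg[of d "q+r"] q0 r0 d0 by linarith
    have c1: "z^2 \<le> r*(r+d)" using G3 by linarith
    have c2: "y^2 < q*(q+d)" using G2 by linarith
    have "y^2 * z^2 \<le> y^2 * (r*(r+d))" using c1 by (rule mult_left_mono) simp
    also have "\<dots> < (q*(q+d)) * (r*(r+d))" using c2 Rp by (rule mult_strict_right_mono)
    also have "\<dots> \<le> (q*r + d*(q+r)/2)^2"
    proof -
      have "(q*r + d*(q+r)/2)^2 = (q*(q+d)) * (r*(r+d)) + (d*(q-r)/2)^2" by (simp add: power2_eq_square field_simps)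
      then show ?thesis using zero_le_power2[of "d*(q-r)/2"] by linarith
    qed
    finally have lt: "y^2 * z^2 < (q*r + d*(q+r)/2)^2" .
    have e: "(y*z)^2 = y^2 * z^2" by (simp add: power_mult_distrib)
    have "(y*z)^2 < (q*r + d*(q+r)/2)^2" unfolding e by (rule lt)
    then have "y*z < q*r + d*(q+r)/2" using M0 by (rule sq_less_base)
    then show ?thesis by linarith
  qed
  have AM2: "0 < p*r + d*(p+r)/2 - t*z"
  proof -
    have M0: "0 \<le> p*r + d*(p+r)/2" using mult_nonneg_nonneg[OF p0 r0] mult_nonneg_nonneg[of d "p+r"] p0 r0 d0 by linarith
    have c1: "z^2 \<le> r*(r+d)" using G3 by linarith
    have c2: "t^2 < p*(p+d)" using G1 by linarith
    have "t^2 * z^2 \<le> t^2 * (r*(r+d))" using c1 by (rule mult_left_mono) simp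
    also have "\<dots> < (p*(p+d)) * (r*(r+d))" using c2 Rp by (rule mult_strict_right_mono)
    also have "\<dots> \<le> (p*r + d*(p+r)/2)^2"
    proof -
      have "(p*r + d*(p+r)/2)^2 = (p*(p+d)) * (r*(r+d)) + (d*(p-r)/2)^2" by (simp add: power2_eq_square field_simps)
      then show ?thesis using zero_le_power2[of "d*(p-r)/2"] by linarith
    qed
    finally have lt: "t^2 * z^2 < (p*r + d*(p+r)/2)^2" .
    have e: "(t*z)^2 = t^2 * z^2" by (simp add: power_mult_distrib)
    have "(t*z)^2 < (p*r + d*(p+r)/2)^2" unfolding e by (rule lt)
    then have "t*z < p*r + d*(p+r)/2" using M0 by (rule sq_less_base)
    then show ?thesis by linarith
  qed
  have AM3: "0 < p*q + d*(p+q)/2 - t*y"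
  proof -
    have M0: "0 \<le> p*q + d*(p+q)/2" using mult_nonneg_nonneg[OF p0 q0] mult_nonneg_nonneg[of d "p+q"] p0 q0 d0 by linarith
    have c1: "y^2 \<le> q*(q+d)" using G2 by linarith
    have c2: "t^2 < p*(p+d)" using G1 by linarith
    have "t^2 * y^2 \<le> t^2 * (q*(q+d))" using c1 by (rule mult_left_mono) simp
    also have "\<dots> < (p*(p+d)) * (q*(q+d))" using c2 Qp by (rule mult_strict_right_mono)
    also have "\<dots> \<le> (p*q + d*(p+q)/2)^2"
    proof -
      have "(p*q + d*(p+q)/2)^2 = (p*(p+d)) * (q*(q+d)) + (d*(p-q)/2)^2" by (simp add: power2_eq_square field_simps)
      then show ?thesis using zero_le_power2[of "d*(p-q)/2"] by linarith
    qed
    finally have lt: "t^2 * y^2 < (p*q + d*(p+q)/2)^2" .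
    have e: "(t*y)^2 = t^2 * y^2" by (simp add: power_mult_distrib)
    have "(t*y)^2 < (p*q + d*(p+q)/2)^2" unfolding e by (rule lt)
    then have "t*y < p*q + d*(p+q)/2" using M0 by (rule sq_less_base)
    then show ?thesis by linarith
  qed
  define Gc where "Gc = (1-x)*(3*x-1) - (1-p)*(3*p-1) - 2*d^2"
  define Gd where "Gd = (1-y)*(3*y-1) + 4*z*(x-t) + 2*(x*y+x*z+y*z) - (1-q)*(3*q-1) - 2*d^2"
  define Ge where "Ge = (1-z)*(3*z-1) + 4*y*(x-t) + 2*(x*y+x*z+y*z) - (1-r)*(3*r-1) - 2*d^2"
  define Gf where "Gf = x*y+x*z+y*z - (p*q+q*r+r*p + d/2)"
  define G1v where "G1v = p*(p+d) - t^2"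
  define G2v where "G2v = q*(q+d) - y^2"
  define G3v where "G3v = r*(r+d) - z^2"
  have idc: "Gc = (p^2+2*q^2+2*r^2+2*q*d+2*r*d-(x^2+2*y^2+2*z^2)) + 4*(q*r + d*(q+r)/2 - y*z)"
    unfolding Gc_def hx hd by (simp add: power2_eq_square field_simps)
  have idd: "Gd = (2*p^2+q^2+2*r^2+2*p*d+2*r*d-(3*x^2+2*y^2+3*z^2-1)) + 4*(p*r + d*(p+r)/2 - t*z)"
    unfolding Gd_def hx hd by (simp add: power2_eq_square field_simps)
  have ide: "Ge = (2*p^2+2*q^2+r^2+2*p*d+2*q*d-(3*x^2+3*y^2+2*z^2-1)) + 4*(p*q + d*(p+q)/2 - t*y)"
    unfolding Ge_def hx hd by (simp add: power2_eq_square field_simps)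
  have idf: "Gf = (p*(p+d) + q*(q+d) + r*(r+d) - (x^2+y^2+z^2)) / 2"
    unfolding Gf_def hx hd by (simp add: power2_eq_square field_simps)
  have Gc0: "0 < Gc" unfolding idc using H5' AM1 by (intro add_pos_pos mult_pos_pos) simp_all
  have Gd0: "0 < Gd" unfolding idd using H6' AM2 by (intro add_pos_pos mult_pos_pos) simp_all
  have Ge0: "0 < Ge" unfolding ide using H7' AM3 by (intro add_pos_pos mult_pos_pos) simp_all
  have Gf0: "0 < Gf"
  proof -
    have "0 < p*(p+d) + q*(q+d) + r*(r+d) - (x^2+y^2+z^2)" using H4' by linarith
    then show ?thesis unfolding idf by simp
  qed
  have G10: "0 < G1v" using G1 unfolding G1v_def .
  have G20: "0 < G2v" using G2 unfolding G2v_def .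
  have G30: "0 < G3v" using G3 unfolding G3v_def .
  have w: "0 < 4/3 - x - p"
  proof -
    have "Gc = 3*((x-p)*(4/3-x-p)) - 2*d^2" unfolding Gc_def by (simp add: power2_eq_square field_simps)
    then have "0 < (x-p)*(4/3-x-p)" using Gc0 by (smt (verit) zero_le_power2)
    then show ?thesis using xp zero_less_mult_pos by blast
  qed
  have wq: "0 < 4/3 - x - q"
  proof -
    have tt2: "t*t = x*x - 2*(x*y+x*z+y*z)" using tt by (simp add: power2_eq_square)
    have "Gd = 3*((x-q)*(4/3-x-q)) - 2*d^2 - (t-y)*(t+y+4*z)" using tt2 unfolding Gd_def hx by (simp add: power2_eq_square field_simps)
    moreover have "0 \<le> (t-y)*(t+y+4*z)" using ty t0 y0 z0 by (intro mult_nonneg_nonneg) linarith+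
    ultimately have "0 < (x-q)*(4/3-x-q)" using Gd0 by (smt (verit) zero_le_power2)
    then show ?thesis using xq zero_less_mult_pos by blast
  qed
  have wr: "0 < 4/3 - x - r"
  proof -
    have "Ge = 3*((x-r)*(4/3-x-r)) - 2*d^2 + (-1 + 4*y + 4*z - 3*y^2 - 2*z^2 - 4*(y*t))" unfolding Ge_def hx by (simp add: power2_eq_square field_simps)
    moreover have "-1 + 4*y + 4*z - 3*y^2 - 2*z^2 - 4*(y*t) \<le> 0"
    proof -
      have "y*y \<le> y*t" using ty y0 by (rule mult_left_mono)
      moreover have "0 \<le> (5*y+z)*(y-z)" using y0 z0 yz by (intro mult_nonneg_nonneg) linarith+
      moreover have "1 - 4*y - 4*z + 7*y^2 + 2*z^2 = (2*x^2+z^2-1) + (5*y+z)*(y-z)" unfolding hx by (simp add: power2_eq_square field_simps)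
      moreover have "y^2 = y*y" by (simp add: power2_eq_square)
      ultimately show ?thesis using dom by linarith
    qed
    ultimately have "0 < (x-r)*(4/3-x-r)" using Ge0 by (smt (verit) zero_le_power2)
    then show ?thesis using xr zero_less_mult_pos by blast
  qed
  have Ly_z: "0 \<le> y - z" using yz by simp
  have Lt_y: "0 \<le> t - y" using ty by simp
  have Lx_p: "0 \<le> x - p" using xp by simp
  have Lw: "0 \<le> 4/3 - x - p" using w by simp
  have Lx_t: "0 \<le> x - t" using tx by simp
  have Lwq: "0 \<le> 4/3 - x - q" using wq by simp
  have Lwr: "0 \<le> 4/3 - x - r" using wr by simp
  note base = Ly_z z0 Lt_y p0 q0 r0 d0 Lx_p Lw Lx_t
  note defs = Gc_def Gd_def Ge_def Gf_def G1v_def G2v_def G3v_def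
  note pos = Gc0 Gd0 Ge0 Gf0 G10 G20 G30
  consider (P) "1/2 \<le> p" | (R) "p < 1/2" "1/2 \<le> r" | (Q) "p < 1/2" "r < 1/2" "1/2 \<le> q"
    | (N) "p < 1/2" "r < 1/2" "q < 1/2" by linarith
  then show False
  proof cases
    case P
    then have "0 \<le> p - 1/2" by simp
    then show False using cert_A[OF hx hd defs base] pos tt by blast
  next
    case R
    then have "0 \<le> r - 1/2" by simp
    then show False using cert_B[OF hx hd defs base] Lwq Lwr pos tt by blast
  next
    case Q
    then have "0 \<le> q - 1/2" by simp
    then show False using cert_C[OF hx hd defs base] Lwq Lwr pos tt by blast
  next
    case N
    then have "0 \<le> 1/2 - p" "0 \<le> 1/2 - q" "0 \<le> 1/2 - r" by simp_all
    then show False using cert_D[OF hx hd defs base] pos tt by blast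
  qed
qed

theorem mainTheorem7:
  fixes a1 a2 x y z a12 a13 a23 d :: real
  assumes "good_pair a1 a2"
    and "canonical_rep a1 a2 x y z"
    and "0 \<le> a12" "0 \<le> a13" "0 \<le> a23" "0 \<le> d"
    and "a12 * (a12 + d) > a1 + a2 - 1"
    and "a13 * (a13 + d) > a1 + (1 - x^2) - 1"
    and "a23 * (a23 + d) > a2 + (1 - x^2) - 1"
    and "a12 * (a12 + d) + a13 * (a13 + d) + a23 * (a23 + d) > a1 + a2 + (1 - x^2) - 1"
    and "a12^2 + 2*a13^2 + 2*a23^2 + 2*a13*d + 2*a23*d > 2*a1 + 2*a2 + 3*(1 - x^2) - 3"
    and "2*a12^2 + a13^2 + 2*a23^2 + 2*a12*d + 2*a23*d > 2*a1 + 3*a2 + 2*(1 - x^2) - 3"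
    and "2*a12^2 + 2*a13^2 + a23^2 + 2*a12*d + 2*a13*d > 3*a1 + 2*a2 + 2*(1 - x^2) - 3"
  shows "a12 + a13 + a23 + d > 1"
proof (rule ccontr)
  assume neg: "\<not> a12 + a13 + a23 + d > 1"
  note cr = assms(2)[unfolded canonical_rep_def]
  have x0: "0 \<le> x" and y0: "0 \<le> y" and z0: "0 \<le> z" and sum: "x + y + z = 1"
    and ha1: "a1 = x^2 + y^2" and ha2: "a2 = x^2 + z^2" using cr by auto
  note gp = assms(1)[unfolded good_pair_def]
  have a21: "a2 \<le> a1" using gp by simp
  have dom: "2*x^2 + z^2 \<ge> 1" using gp assms(2) by blast
  have "z^2 \<le> y^2" using a21 ha1 ha2 by linarith
  then have yz: "z \<le> y" using y0 by (rule power2_le_imp_le)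
  define D where "D = d + (1 - (a12 + a13 + a23 + d))"
  have dD: "d \<le> D" using neg unfolding D_def by linarith
  have s1: "a12 + a13 + a23 + D = 1" unfolding D_def by simp
  have D0: "0 \<le> D" using dD assms(6) by linarith
  have m1: "a12*d \<le> a12*D" using dD assms(3) by (rule mult_left_mono)
  have m2: "a13*d \<le> a13*D" using dD assms(4) by (rule mult_left_mono)
  have m3: "a23*d \<le> a23*D" using dD assms(5) by (rule mult_left_mono)
  have e1: "\<And>u v::real. u*(u+v) = u^2 + u*v" by (simp add: power2_eq_square algebra_simps)
  have e2: "\<And>u v::real. 2*u*v = 2*(u*v)" by simp
  show False
  proof (rule reduced[OF sum x0 z0 yz dom ha1 ha2 assms(3-5) D0 s1])
    show "a12 * (a12 + D) > a1 + a2 - 1" using assms(7) m1 e1[of a12 d] e1[of a12 D] by linarith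
    show "a13 * (a13 + D) > a1 + (1 - x^2) - 1" using assms(8) m2 e1[of a13 d] e1[of a13 D] by linarith
    show "a23 * (a23 + D) > a2 + (1 - x^2) - 1" using assms(9) m3 e1[of a23 d] e1[of a23 D] by linarith
    show "a12 * (a12 + D) + a13 * (a13 + D) + a23 * (a23 + D) > a1 + a2 + (1 - x^2) - 1"
      using assms(10) m1 m2 m3 e1[of a12 d] e1[of a12 D] e1[of a13 d] e1[of a13 D] e1[of a23 d] e1[of a23 D] by linarith
    show "a12^2 + 2*a13^2 + 2*a23^2 + 2*a13*D + 2*a23*D > 2*a1 + 2*a2 + 3*(1 - x^2) - 3"
      using assms(11) m2 m3 e2[of a13 D] e2[of a23 D] e2[of a13 d] e2[of a23 d] by linarith
    show "2*a12^2 + a13^2 + 2*a23^2 + 2*a12*D + 2*a23*D > 2*a1 + 3*a2 + 2*(1 - x^2) - 3"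
      using assms(12) m1 m3 e2[of a12 D] e2[of a23 D] e2[of a12 d] e2[of a23 d] by linarith
    show "2*a12^2 + 2*a13^2 + a23^2 + 2*a12*D + 2*a13*D > 3*a1 + 2*a2 + 2*(1 - x^2) - 3"
      using assms(13) m1 m2 e2[of a12 D] e2[of a13 D] e2[of a12 d] e2[of a13 d] by linarith
  qed
qed

end
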